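(* Let $P\subset\mathbb R^d$ be a $d$-polytope, $d\geq 3$, $S$ a simplex facet of $P$ in bounded position, $\mathcal F\subseteq\operatorname{adj}(S)$ nonsimple, $v\in V_S(\mathcal F,\emptyset;P)$ and $Q=\operatorname{conv}(P\cup\{v\})$. Then: (1) every edge of $Q$ is of one of the following two types: (a) an edge $e$ of $P$ with $e\subseteq F$ for some facet $F$ of $P$ with $F\notin\{S\}\cup\mathcal F$; (b) a segment $e=[v,v']$, one for every vertex $v'$ of $S$, and in this case $\operatorname{fdeg}_Q(e)=\operatorname{fdeg}_S(v')$; (2) $f_1(Q)=f_1(P)+d-f$, where $f=|\mathcal F|$ if $d=3$ and $f=0$ otherwise.
   Context: For a face $G$ of a polytope $X$, $\operatorname{fdeg}_X(G)$ is the number of facets of $X$ containing $G$ (for $v'$ a vertex of the facet $S$, $S$ is regarded as a $(d-1)$-polytope). $f_1$ is the number of edges. For a facet $F$ of $P$ let $H_F=\{x:\langle x,a_F\rangle=\ell_F\}$ be its affine hull, oriented so that $P\subseteq\{x:\langle x,a_F\rangle\geq\ell_F\}$; $H_F^+$, $H_F^-$ are the open sides $\{>\}$, $\{<\}$. Two facets are adjacent if they share a ridge; $\operatorname{adj}(S)$ is the set of facets adjacent to $S$. A simplex facet is a facet combinatorially equivalent to a $(d-1)$-simplex. $S$ is in bounded position if for every set of $d$ facets in $\operatorname{adj}(S)$ their hyperplanes meet in a point of $H_S^-$. $\mathcal F\subseteq\operatorname{adj}(S)$ is nonsimple if there is no pair of adjacent facets $G,G'\in\mathcal F$ having a common $(d-3)$-face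 with $S$. $V_S(\mathcal F,\mathcal N;P)$ is the set of points lying in $H_F^-$ for $F\in\mathcal N\cup\{S\}$, in $H_F$ for $F\in\mathcal F$, and in $H_F^+$ for all other facets $F$ of $P$. *)

theory Defs
  imports "HOL-Analysis.Analysis"
begin

definition fdeg :: "'a::euclidean_space set \<Rightarrow> 'a set \<Rightarrow> nat" where
  "fdeg X G = card {F. F facet_of X \<and> G \<subseteq> F}"

definition f1 :: "'a::euclidean_space set \<Rightarrow> nat" where
  "f1 X = card {e. e edge_of X}"

text \<open>Open sides of the facet hyperplane H_F = aff hull F, oriented so that
  P lies in the closed positive side {x. a\<bullet>x \<ge> l}.\<close>
definition facet_plus :: "'a::euclidean_space set \<Rightarrow> 'a set \<Rightarrow> 'a set" where
  "facet_plus P F = {x. \<exists>a l. a \<noteq> 0 \<and> affine hull F = {y. a \<bullet> y = l} \<and>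
                        P \<subseteq> {y. a \<bullet> y \<ge> l} \<and> a \<bullet> x > l}"

definition facet_minus :: "'a::euclidean_space set \<Rightarrow> 'a set \<Rightarrow> 'a set" where
  "facet_minus P F = {x. \<exists>a l. a \<noteq> 0 \<and> affine hull F = {y. a \<bullet> y = l} \<and>
                        P \<subseteq> {y. a \<bullet> y \<ge> l} \<and> a \<bullet> x < l}"

definition adjacent_facets :: "'a::euclidean_space set \<Rightarrow> 'a set \<Rightarrow> 'a set \<Rightarrow> bool" where
  "adjacent_facets P F G \<longleftrightarrow> F facet_of P \<and> G facet_of P \<and> F \<noteq> G \<and>
     aff_dim (F \<inter> G) = aff_dim P - 2"

definition adj :: "'a::euclidean_space set \<Rightarrow> 'a set \<Rightarrow> 'a set set" where
  "adj P S = {F. adjacent_facets P S F}"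

definition simplex_facet :: "'a::euclidean_space set \<Rightarrow> 'a set \<Rightarrow> bool" where
  "simplex_facet P S \<longleftrightarrow> S facet_of P \<and> (aff_dim P - 1) simplex S"

definition bounded_position :: "'a::euclidean_space set \<Rightarrow> 'a set \<Rightarrow> bool" where
  "bounded_position P S \<longleftrightarrow>
     (\<forall>\<F>. \<F> \<subseteq> adj P S \<and> card \<F> = DIM('a) \<longrightarrow>
        (\<exists>x. \<Inter>{affine hull F | F. F \<in> \<F>} = {x} \<and> x \<in> facet_minus P S))"

definition nonsimple :: "'a::euclidean_space set \<Rightarrow> 'a set \<Rightarrow> 'a set set \<Rightarrow> bool" where
  "nonsimple P S \<F> \<longleftrightarrow>
     \<not> (\<exists>G\<in>\<F>. \<exists>G'\<in>\<F>. adjacent_facets P G G' \<and>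
            (G \<inter> G' \<inter> S) face_of S \<and> aff_dim (G \<inter> G' \<inter> S) = aff_dim P - 3)"

definition V_S :: "'a::euclidean_space set \<Rightarrow> 'a set \<Rightarrow> 'a set set \<Rightarrow> 'a set set \<Rightarrow> 'a set" where
  "V_S P S \<F> \<N> = {x.
      (\<forall>F\<in>\<N> \<union> {S}. x \<in> facet_minus P F) \<and>
      (\<forall>F\<in>\<F>. x \<in> affine hull F) \<and>
      (\<forall>F. F facet_of P \<and> F \<notin> \<N> \<union> {S} \<union> \<F> \<longrightarrow> x \<in> facet_plus P F)}"

end

theory Submission
  imports Defs
begin


lemma hyperplane_prop:
  fixes a b :: "'a::euclidean_space"
  assumes "a \<noteq> 0" "{y. a \<bullet> y = l} = {y. b \<bullet> y = m}"
  shows "\<exists>\<mu>. b = \<mu> *\<^sub>R a \<and> m = \<mu> * l"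
proof -
  define x0 where "x0 = (l / (a \<bullet> a)) *\<^sub>R a"
  have aa: "a \<bullet> a \<noteq> 0" using assms(1) by simp
  have x0: "a \<bullet> x0 = l" using aa by (simp add: x0_def)
  have bx0: "b \<bullet> x0 = m" using x0 assms(2) by blast
  have orth: "b \<bullet> w = 0" if "a \<bullet> w = 0" for w
  proof -
    have "a \<bullet> (x0 + w) = l" using x0 that by (simp add: inner_add_right)
    then have "b \<bullet> (x0 + w) = m" using assms(2) by blast
    then show ?thesis using bx0 by (simp add: inner_add_right)
  qed
  define \<mu> where "\<mu> = (b \<bullet> a) / (a \<bullet> a)"
  define w where "w = b - \<mu> *\<^sub>R a"
  have "a \<bullet> w = 0" using aa by (simp add: w_def \<mu>_def inner_diff_right inner_commute)
  then have bw: "b \<bullet> w = 0" by (rule orth)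
  have "w \<bullet> w = 0" using bw \<open>a \<bullet> w = 0\<close>
    by (simp add: w_def inner_diff_left inner_commute)
  then have "w = 0" by simp
  then have bm: "b = \<mu> *\<^sub>R a" by (simp add: w_def)
  have "m = \<mu> * l" using bx0 x0 bm by simp
  with bm show ?thesis by blast
qed

lemma small_t:
  fixes c d :: "'i \<Rightarrow> real"
  assumes "finite I" "\<And>i. i \<in> I \<Longrightarrow> c i > 0"
  shows "\<exists>t>0. \<forall>s. 0 < s \<and> s \<le> t \<longrightarrow> (\<forall>i\<in>I. c i + s * d i > 0)"
proof -
  have "\<forall>i\<in>I. eventually (\<lambda>s. c i + s * d i > 0) (at_right 0)"
  proof
    fix i assume "i \<in> I"
    have "((\<lambda>s. c i + s * d i) \<longlongrightarrow> c i + 0 * d i) (at_right 0)"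
      by (intro tendsto_intros)
    then show "eventually (\<lambda>s. c i + s * d i > 0) (at_right 0)"
      using assms(2)[OF \<open>i \<in> I\<close>] by (simp add: order_tendstoD(1))
  qed
  then have "eventually (\<lambda>s. \<forall>i\<in>I. c i + s * d i > 0) (at_right 0)"
    using assms(1) by (simp add: eventually_ball_finite)
  then obtain b where b: "b > 0" "\<And>s. s > 0 \<Longrightarrow> s < b \<Longrightarrow> \<forall>i\<in>I. c i + s * d i > 0"
    unfolding eventually_at_right_field by auto
  show ?thesis
    by (rule exI[of _ "b/2"]) (use b in auto)
qed

lemma same_dim_face:
  fixes X :: "'a::euclidean_space set"
  assumes "convex X" "A face_of X" "B face_of X" "A \<subseteq> B" "aff_dim A = aff_dim B"
  shows "A = B"
proof (rule ccontr)
  assume "A \<noteq> B"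
  have "A face_of B" using face_of_subset[OF assms(2) assms(4)] assms(3) face_of_imp_subset by blast
  moreover have "convex B" using assms(3) face_of_imp_convex by blast
  ultimately have "aff_dim A < aff_dim B" using face_of_aff_dim_lt \<open>A \<noteq> B\<close> by blast
  with assms(5) show False by simp
qed

lemma facets_Int_lt:
  fixes X :: "'a::euclidean_space set"
  assumes "convex X" "F facet_of X" "G facet_of X" "F \<noteq> G"
  shows "aff_dim (F \<inter> G) < aff_dim F"
proof -
  have fF: "F face_of X" and gG: "G face_of X" using assms facet_of_imp_face_of by blast+
  have i: "(F \<inter> G) face_of F"
    by (meson face_of_Int fF gG face_of_subset inf_le1 face_of_imp_subset)
  have "F \<inter> G \<noteq> F"
  proof
    assume "F \<inter> G = F"
    then have "F \<subseteq> G" by blast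
    moreover have "aff_dim F = aff_dim G" using assms(2,3) by (simp add: facet_of_def)
    ultimately have "F = G" using same_dim_face[OF assms(1) fF gG] by blast
    with assms(4) show False by simp
  qed
  then show ?thesis
    using face_of_aff_dim_lt[OF face_of_imp_convex[OF fF] i] by blast
qed

lemma ridge_other_facet:
  fixes X :: "'a::euclidean_space set"
  assumes "polyhedron X" "R face_of X" "R \<noteq> {}" "aff_dim R = aff_dim X - 2"
    "F facet_of X" "R \<subseteq> F"
  shows "\<exists>G. G facet_of X \<and> G \<noteq> F \<and> R \<subseteq> G"
proof (rule ccontr)
  assume H: "\<not> ?thesis"
  have "R \<noteq> X" using assms(4) by auto
  then have "R = \<Inter>{G. G facet_of X \<and> R \<subseteq> G}"
    using face_of_polyhedron assms(1,2,3) by blast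
  also have "{G. G facet_of X \<and> R \<subseteq> G} = {F}" using H assms(5,6) by blast
  finally have "R = F" by simp
  then show False using assms(4,5) by (simp add: facet_of_def)
qed

lemma face_Int_subset:
  assumes "E face_of Q" "P \<subseteq> Q" "convex P"
  shows "(E \<inter> P) face_of P"
proof -
  have "convex (E \<inter> P)" using assms face_of_imp_convex convex_Int by blast
  then show ?thesis using assms(1,2) unfolding face_of_def by blast
qed



locale fullpoly =
  fixes P :: "'a::euclidean_space set"
  assumes polyP: "polytope P" and dimP: "aff_dim P = int DIM('a)"
begin

definition goodrep :: "'a set \<Rightarrow> 'a \<times> real \<Rightarrow> bool" where
  "goodrep F p \<longleftrightarrow> fst p \<noteq> 0 \<and> affine hull F = {y. fst p \<bullet> y = snd p} \<and>
      P \<subseteq> {y. fst p \<bullet> y \<ge> snd p} \<and> F = P \<inter> {y. fst p \<bullet> y = snd p}"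

definition nrm :: "'a set \<Rightarrow> 'a" where "nrm F = fst (SOME p. goodrep F p)"
definition off :: "'a set \<Rightarrow> real" where "off F = snd (SOME p. goodrep F p)"

lemma convexP: "convex P" using polyP polytope_imp_convex by blast
lemma polyhP: "polyhedron P" using polyP polytope_imp_polyhedron by blast
lemma P_ne: "P \<noteq> {}" using dimP by auto
lemma finite_facets: "finite {F. F facet_of P}" using finite_polytope_facets polyP by blast

lemma facet_dim: "F facet_of P \<Longrightarrow> aff_dim F = int DIM('a) - 1"
  using dimP by (simp add: facet_of_def)

lemma facet_in_hyperplane:
  assumes "F facet_of P" "F \<subseteq> {y. a \<bullet> y = l}" "a \<noteq> 0"
  shows "affine hull F = {y. a \<bullet> y = l}"
proof (rule affine_dim_equal)
  show "affine (affine hull F)" by simp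
  show "affine {y. a \<bullet> y = l}" by (rule affine_hyperplane)
  show "affine hull F \<noteq> {}" using assms(1) by (simp add: facet_of_def)
  show "affine hull F \<subseteq> {y. a \<bullet> y = l}"
    using assms(2) by (simp add: hull_minimal affine_hyperplane)
  show "aff_dim (affine hull F) = aff_dim {y. a \<bullet> y = l}"
    using facet_dim[OF assms(1)] assms(3) by simp
qed

lemma goodrep_ex: "F facet_of P \<Longrightarrow> \<exists>p. goodrep F p"
proof -
  assume F: "F facet_of P"
  obtain a b where ab: "a \<noteq> 0" "P \<subseteq> {x. a \<bullet> x \<le> b}" "F = P \<inter> {x. a \<bullet> x = b}"
    using facet_of_polyhedron[OF polyhP F] by blast
  have e: "{y. (-a) \<bullet> y = -b} = {x. a \<bullet> x = b}" by auto
  have "affine hull F = {x. a \<bullet> x = b}"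
    using facet_in_hyperplane[OF F _ ab(1)] ab(3) by blast
  then have "goodrep F (-a, -b)"
    unfolding goodrep_def using ab e by auto
  then show ?thesis by blast
qed

lemma facet_rep:
  assumes "F facet_of P"
  shows "nrm F \<noteq> 0" "affine hull F = {y. nrm F \<bullet> y = off F}"
    "P \<subseteq> {y. nrm F \<bullet> y \<ge> off F}" "F = P \<inter> {y. nrm F \<bullet> y = off F}"
proof -
  have "goodrep F (SOME p. goodrep F p)" using goodrep_ex[OF assms] by (rule someI_ex)
  then show "nrm F \<noteq> 0" "affine hull F = {y. nrm F \<bullet> y = off F}"
    "P \<subseteq> {y. nrm F \<bullet> y \<ge> off F}" "F = P \<inter> {y. nrm F \<bullet> y = off F}"
    unfolding goodrep_def nrm_def off_def by auto
qed

lemma facet_ge: "F facet_of P \<Longrightarrow> x \<in> P \<Longrightarrow> nrm F \<bullet> x \<ge> off F"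
  using facet_rep(3) by blast

lemma facet_mem: "F facet_of P \<Longrightarrow> x \<in> P \<Longrightarrow> x \<in> F \<longleftrightarrow> nrm F \<bullet> x = off F"
  using facet_rep(4) by blast

lemma facet_mem': "F facet_of P \<Longrightarrow> x \<in> F \<Longrightarrow> nrm F \<bullet> x = off F"
  using facet_rep(4) by blast

lemma facet_aff: "F facet_of P \<Longrightarrow> x \<in> affine hull F \<longleftrightarrow> nrm F \<bullet> x = off F"
  using facet_rep(2) by blast

lemma exists_off_point:
  assumes "a \<noteq> 0"
  shows "\<exists>p\<in>P. a \<bullet> p \<noteq> l"
proof (rule ccontr)
  assume "\<not> ?thesis"
  then have "P \<subseteq> {y. a \<bullet> y = l}" by auto
  then have "aff_dim P \<le> aff_dim {y. a \<bullet> y = l}" by (rule aff_dim_subset)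
  then show False using assms dimP by simp
qed

lemma rep_prop:
  assumes "F facet_of P" "a \<noteq> 0" "affine hull F = {y. a \<bullet> y = l}" "P \<subseteq> {y. a \<bullet> y \<ge> l}"
  shows "\<exists>\<mu>>0. a = \<mu> *\<^sub>R nrm F \<and> l = \<mu> * off F"
proof -
  obtain \<mu> where mu: "a = \<mu> *\<^sub>R nrm F" "l = \<mu> * off F"
    using hyperplane_prop[OF facet_rep(1)[OF assms(1)], of "off F" a l]
      facet_rep(2)[OF assms(1)] assms(3) by auto
  obtain p where p: "p \<in> P" "nrm F \<bullet> p \<noteq> off F"
    using exists_off_point[OF facet_rep(1)[OF assms(1)]] by blast
  have gt: "nrm F \<bullet> p > off F" using p facet_ge[OF assms(1)] by force
  have "a \<bullet> p \<ge> l" using assms(4) p(1) by blast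
  then have "\<mu> * (nrm F \<bullet> p) \<ge> \<mu> * off F" using mu by simp
  then have "\<mu> * (nrm F \<bullet> p - off F) \<ge> 0" by (simp add: algebra_simps)
  then have "\<mu> \<ge> 0" using gt by (simp add: zero_le_mult_iff)
  moreover have "\<mu> \<noteq> 0" using mu assms(2) by auto
  ultimately have "\<mu> > 0" by simp
  then show ?thesis using mu by blast
qed

lemma facet_plus_eq:
  assumes "F facet_of P"
  shows "facet_plus P F = {x. nrm F \<bullet> x > off F}"
proof
  show "facet_plus P F \<subseteq> {x. nrm F \<bullet> x > off F}"
  proof
    fix x assume "x \<in> facet_plus P F"
    then obtain a l where al: "a \<noteq> 0" "affine hull F = {y. a \<bullet> y = l}"
      "P \<subseteq> {y. a \<bullet> y \<ge> l}" "a \<bullet> x > l"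
      unfolding facet_plus_def by blast
    obtain \<mu> where "\<mu> > 0" "a = \<mu> *\<^sub>R nrm F" "l = \<mu> * off F"
      using rep_prop[OF assms al(1-3)] by blast
    then show "x \<in> {x. nrm F \<bullet> x > off F}" using al(4) by simp
  qed
  show "{x. nrm F \<bullet> x > off F} \<subseteq> facet_plus P F"
    unfolding facet_plus_def using facet_rep[OF assms] by blast
qed

lemma facet_minus_eq:
  assumes "F facet_of P"
  shows "facet_minus P F = {x. nrm F \<bullet> x < off F}"
proof
  show "facet_minus P F \<subseteq> {x. nrm F \<bullet> x < off F}"
  proof
    fix x assume "x \<in> facet_minus P F"
    then obtain a l where al: "a \<noteq> 0" "affine hull F = {y. a \<bullet> y = l}"
      "P \<subseteq> {y. a \<bullet> y \<ge> l}" "a \<bullet> x < l"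
      unfolding facet_minus_def by blast
    obtain \<mu> where "\<mu> > 0" "a = \<mu> *\<^sub>R nrm F" "l = \<mu> * off F"
      using rep_prop[OF assms al(1-3)] by blast
    then show "x \<in> {x. nrm F \<bullet> x < off F}" using al(4) by simp
  qed
  show "{x. nrm F \<bullet> x < off F} \<subseteq> facet_minus P F"
    unfolding facet_minus_def using facet_rep[OF assms] by blast
qed

lemma in_P:
  assumes "\<And>F. F facet_of P \<Longrightarrow> nrm F \<bullet> x \<ge> off F"
  shows "x \<in> P"
proof -
  obtain Fam where fin: "finite Fam" and seq: "P = affine hull P \<inter> \<Inter>Fam"
    and faces: "\<And>h. h \<in> Fam \<Longrightarrow> \<exists>a b. a \<noteq> 0 \<and> h = {x. a \<bullet> x \<le> b}"
    and min: "\<And>F'. F' \<subset> Fam \<Longrightarrow> P \<subset> (affine hull P) \<inter> \<Inter>F'"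
    using polyhP by (simp add: polyhedron_Int_affine_minimal) meson
  then obtain a b where ab: "\<And>h. h \<in> Fam \<Longrightarrow> a h \<noteq> 0 \<and> h = {x. a h \<bullet> x \<le> b h}"
    by metis
  have ahP: "affine hull P = UNIV" using dimP aff_dim_eq_full by blast
  have "x \<in> h" if h: "h \<in> Fam" for h
  proof -
    let ?C = "P \<inter> {x. a h \<bullet> x = b h}"
    have C: "?C facet_of P"
      using facet_of_polyhedron_explicit[OF fin seq ab min] h by blast
    have ne: "- a h \<noteq> 0" using ab[OF h] by simp
    have e: "{y. (- a h) \<bullet> y = - b h} = {x. a h \<bullet> x = b h}" by auto
    have sub: "?C \<subseteq> {y. (- a h) \<bullet> y = - b h}" using e by blast
    have ah: "affine hull ?C = {y. (- a h) \<bullet> y = - b h}"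
      by (rule facet_in_hyperplane[OF C sub ne])
    have "P \<subseteq> h" using seq h by blast
    then have Ph: "P \<subseteq> {y. (- a h) \<bullet> y \<ge> - b h}" using ab[OF h] by auto
    obtain \<mu> where mu: "\<mu> > 0" "- a h = \<mu> *\<^sub>R nrm ?C" "- b h = \<mu> * off ?C"
      using rep_prop[OF C ne ah Ph] by blast
    have "nrm ?C \<bullet> x \<ge> off ?C" using assms[OF C] .
    then have "\<mu> * (nrm ?C \<bullet> x) \<ge> \<mu> * off ?C" using mu(1) by simp
    then have "(- a h) \<bullet> x \<ge> - b h" using mu by simp
    then have xin: "x \<in> {x. a h \<bullet> x \<le> b h}" by simp
    have hh: "h = {x. a h \<bullet> x \<le> b h}" using ab[OF h] by blast
    from xin show "x \<in> h" by (simp only: hh[symmetric])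
  qed
  then show "x \<in> P" using seq ahP by blast
qed

lemma ridge_unique:
  assumes F: "F facet_of P" and G: "G facet_of P" and H: "H facet_of P"
    and d: "F \<noteq> G" "F \<noteq> H" "G \<noteq> H"
    and R: "R \<subseteq> F" "R \<subseteq> G" "R \<subseteq> H" "aff_dim R = int DIM('a) - 2"
  shows False
proof -
  have pt: "\<exists>y\<in>F. y \<in> P \<and> nrm G \<bullet> y > off G \<and> nrm H \<bullet> y > off H"
    if F: "F facet_of P" and G: "G facet_of P" and H: "H facet_of P"
    and d: "F \<noteq> G" "F \<noteq> H" for F G H
  proof -
    have cF: "convex F" using F facet_of_imp_face_of face_of_imp_convex by blast
    have "F \<noteq> {}" using F by (simp add: facet_of_def)
    then obtain y where y: "y \<in> rel_interior F" using rel_interior_eq_empty cF by blast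
    have yF: "y \<in> F" using y rel_interior_subset by blast
    have yP: "y \<in> P" using yF F facet_of_imp_subset by blast
    have notin: "y \<notin> K" if K: "K facet_of P" "K \<noteq> F" for K
    proof -
      have fF: "F face_of P" and fK: "K face_of P" using F K facet_of_imp_face_of by blast+
      have i: "(F \<inter> K) face_of F"
        by (meson face_of_Int fF fK face_of_subset inf_le1 face_of_imp_subset)
      have "F \<inter> K \<noteq> F"
        using facets_Int_lt[OF convexP F K(1)] K(2) by (metis order_less_irrefl)
      then have "(F \<inter> K) \<inter> rel_interior F = {}" using face_of_disjoint_rel_interior i by blast
      then show ?thesis using y yF by blast
    qed
    have "nrm G \<bullet> y > off G"
      using notin[OF G] d facet_ge[OF G yP] facet_mem[OF G yP] by force
    moreover have "nrm H \<bullet> y > off H"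
      using notin[OF H] d facet_ge[OF H yP] facet_mem[OF H yP] by force
    ultimately show ?thesis using yF yP by blast
  qed
  obtain yF where yF: "yF \<in> F" "yF \<in> P" "nrm G \<bullet> yF > off G" "nrm H \<bullet> yF > off H"
    using pt[OF F G H d(1,2)] by blast
  obtain yG where yG: "yG \<in> G" "yG \<in> P" "nrm F \<bullet> yG > off F" "nrm H \<bullet> yG > off H"
    using pt[OF G F H] d by metis
  obtain yH where yH: "yH \<in> H" "yH \<in> P" "nrm F \<bullet> yH > off F" "nrm G \<bullet> yH > off G"
    using pt[OF H F G] d by metis
  define f where "f K p = nrm K \<bullet> p - off K" for K p
  define A where "A = {p. \<exists>l1 l2. \<forall>K\<in>{F,G,H}. f K p = l1 * f K yF + l2 * f K yG}"
  have affA: "affine A"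
    unfolding affine_def
  proof (intro ballI allI impI)
    fix x y u v assume x: "x \<in> A" and y: "y \<in> A" and uv: "(u::real) + v = 1"
    obtain a1 a2 where a: "\<forall>K\<in>{F,G,H}. f K x = a1 * f K yF + a2 * f K yG" using x A_def by blast
    obtain b1 b2 where b: "\<forall>K\<in>{F,G,H}. f K y = b1 * f K yF + b2 * f K yG" using y A_def by blast
    have "\<forall>K\<in>{F,G,H}. f K (u *\<^sub>R x + v *\<^sub>R y) = (u * a1 + v * b1) * f K yF + (u * a2 + v * b2) * f K yG"
    proof
      fix K assume K: "K \<in> {F,G,H}"
      have o: "off K = u * off K + v * off K" using uv by (metis distrib_right mult_1)
      have "f K (u *\<^sub>R x + v *\<^sub>R y) = u * f K x + v * f K y"
        unfolding f_def by (subst o) (simp add: inner_add_right algebra_simps)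
      also have "\<dots> = (u * a1 + v * b1) * f K yF + (u * a2 + v * b2) * f K yG"
      proof -
        have "f K x = a1 * f K yF + a2 * f K yG" "f K y = b1 * f K yF + b2 * f K yG"
          using a b K by blast+
        then show ?thesis by (simp add: algebra_simps)
      qed
      finally show "f K (u *\<^sub>R x + v *\<^sub>R y) = (u * a1 + v * b1) * f K yF + (u * a2 + v * b2) * f K yG" .
    qed
    then show "u *\<^sub>R x + v *\<^sub>R y \<in> A" unfolding A_def by blast
  qed
  have fR: "f K r = 0" if "K \<in> {F,G,H}" "r \<in> R" for K r
    using that R facet_mem'[OF F] facet_mem'[OF G] facet_mem'[OF H] f_def by auto
  have fF0: "f F yF = 0" using facet_mem'[OF F yF(1)] f_def by simp
  have fG0: "f G yG = 0" using facet_mem'[OF G yG(1)] f_def by simp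
  have fH0: "f H yH = 0" using facet_mem'[OF H yH(1)] f_def by simp
  have sub: "insert yG (insert yF R) \<subseteq> A"
  proof -
    have "R \<subseteq> A"
    proof
      fix r assume r: "r \<in> R"
      have "\<forall>K\<in>{F,G,H}. f K r = 0 * f K yF + 0 * f K yG" using fR[OF _ r] by simp
      then show "r \<in> A" unfolding A_def by blast
    qed
    moreover have "\<forall>K\<in>{F,G,H}. f K yF = 1 * f K yF + 0 * f K yG" by simp
    then have "yF \<in> A" unfolding A_def by blast
    moreover have "\<forall>K\<in>{F,G,H}. f K yG = 0 * f K yF + 1 * f K yG" by simp
    then have "yG \<in> A" unfolding A_def by blast
    ultimately show ?thesis by blast
  qed
  have n1: "yF \<notin> affine hull R"
  proof
    assume "yF \<in> affine hull R"
    moreover have "affine hull R \<subseteq> affine hull G" using R(2) hull_mono by blast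
    ultimately have "nrm G \<bullet> yF = off G" using facet_aff[OF G] by blast
    then show False using yF(3) by simp
  qed
  have n2: "yG \<notin> affine hull (insert yF R)"
  proof
    assume "yG \<in> affine hull (insert yF R)"
    moreover have "insert yF R \<subseteq> F" using R(1) yF(1) by blast
    then have "affine hull (insert yF R) \<subseteq> affine hull F" by (rule hull_mono)
    ultimately have "nrm F \<bullet> yG = off F" using facet_aff[OF F] by blast
    then show False using yG(3) by simp
  qed
  have "aff_dim (insert yF R) = aff_dim R + 1"
    using n1 aff_dim_insert[of yF R] by simp
  then have "aff_dim (insert yG (insert yF R)) = aff_dim R + 2"
    using n2 aff_dim_insert[of yG "insert yF R"] by simp
  then have "aff_dim (insert yG (insert yF R)) = int DIM('a)"
    using R(4) by simp
  then have "affine hull (insert yG (insert yF R)) = UNIV" using aff_dim_eq_full by blast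
  moreover have "affine hull (insert yG (insert yF R)) \<subseteq> A"
    using sub affA by (simp add: hull_minimal)
  ultimately have "yH \<in> A" by blast
  then obtain l1 l2 where l: "\<forall>K\<in>{F,G,H}. f K yH = l1 * f K yF + l2 * f K yG"
    unfolding A_def by blast
  have eF: "f F yH = l2 * f F yG" using l fF0 by simp
  have eG: "f G yH = l1 * f G yF" using l fG0 by simp
  have eH: "0 = l1 * f H yF + l2 * f H yG" using l fH0 by simp
  have p1: "f F yH > 0" "f F yG > 0" "f G yH > 0" "f G yF > 0" "f H yF > 0" "f H yG > 0"
    using yF yG yH f_def by auto
  have "0 < l2 * f F yG" using eF p1 by simp
  then have "l2 > 0" using p1 by (simp add: zero_less_mult_iff)
  moreover have "0 < l1 * f G yF" using eG p1 by simp
  then have "l1 > 0" using p1 by (simp add: zero_less_mult_iff)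
  ultimately have "l1 * f H yF + l2 * f H yG > 0" using p1 by (simp add: add_pos_pos)
  with eH show False by simp
qed

end


lemma card_two_elems:
  assumes "finite A" "2 \<le> card A"
  obtains a b where "a \<in> A" "b \<in> A" "a \<noteq> b"
proof -
  have "\<not> card A \<le> Suc 0" using assms(2) by simp
  then show ?thesis using card_le_Suc0_iff_eq[OF assms(1)] that by blast
qed

lemma indep_mem:
  assumes "\<not> affine_dependent c" "c' \<subseteq> c" "x \<in> c" "x \<in> affine hull c'"
  shows "x \<in> c'"
proof (rule ccontr)
  assume "x \<notin> c'"
  then have "c' \<subseteq> c - {x}" using assms(2) by blast
  then have "x \<in> affine hull (c - {x})" using assms(4) hull_mono by blast
  then have "affine_dependent c" using assms(3) affine_dependent_def by blast
  with assms(1) show False by simp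
qed

locale setting = fullpoly P for P :: "'a::euclidean_space set" +
  fixes S :: "'a set" and FF :: "'a set set" and v :: 'a
  assumes d3: "DIM('a) \<ge> 3"
    and simpS: "simplex_facet P S"
    and FFadj: "FF \<subseteq> adj P S"
    and nons: "nonsimple P S FF"
    and vV: "v \<in> V_S P S FF {}"
begin

lemma S_facet: "S facet_of P" using simpS by (simp add: simplex_facet_def)
lemma S_face: "S face_of P" using S_facet facet_of_imp_face_of by blast
lemma S_sub: "S \<subseteq> P" using S_facet facet_of_imp_subset by blast
lemma dimS: "aff_dim S = int DIM('a) - 1" using facet_dim S_facet by blast
lemma convexS: "convex S" using S_face face_of_imp_convex by blast

definition cS where "cS = (SOME c. \<not> affine_dependent c \<and> card c = DIM('a) \<and> S = convex hull c)"

lemma cS: "\<not> affine_dependent cS" "card cS = DIM('a)" "S = convex hull cS"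
proof -
  obtain c where c: "\<not> affine_dependent c" "int (card c) = (aff_dim P - 1) + 1" "S = convex hull c"
    using simpS unfolding simplex_facet_def simplex_def by blast
  then have "\<not> affine_dependent c \<and> card c = DIM('a) \<and> S = convex hull c" using dimP by simp
  then have "\<not> affine_dependent cS \<and> card cS = DIM('a) \<and> S = convex hull cS"
    unfolding cS_def by (rule someI)
  then show "\<not> affine_dependent cS" "card cS = DIM('a)" "S = convex hull cS" by auto
qed

lemma finite_cS: "finite cS" using cS(1) aff_independent_finite by blast

lemma aff_dim_sub: "c' \<subseteq> cS \<Longrightarrow> aff_dim (convex hull c') = int (card c') - 1"
  using aff_dim_affine_independent[of c'] affine_independent_subset[OF cS(1)]
  by (simp add: aff_dim_convex_hull)

lemma FF_facet: "F \<in> FF \<Longrightarrow> F facet_of P \<and> F \<noteq> S \<and> aff_dim (S \<inter> F) = int DIM('a) - 2"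
  using FFadj dimP unfolding adj_def adjacent_facets_def by auto

lemma v_S: "nrm S \<bullet> v < off S"
proof -
  have "v \<in> facet_minus P S" using vV unfolding V_S_def by blast
  then show ?thesis using facet_minus_eq[OF S_facet] by blast
qed

lemma v_FF: "F \<in> FF \<Longrightarrow> nrm F \<bullet> v = off F"
proof -
  assume F: "F \<in> FF"
  have "v \<in> affine hull F" using vV F unfolding V_S_def by blast
  then show ?thesis using facet_aff FF_facet[OF F] by blast
qed

lemma v_other: "F facet_of P \<Longrightarrow> F \<noteq> S \<Longrightarrow> F \<notin> FF \<Longrightarrow> nrm F \<bullet> v > off F"
proof -
  assume F: "F facet_of P" "F \<noteq> S" "F \<notin> FF"
  have "v \<in> facet_plus P F" using vV F unfolding V_S_def by blast
  then show ?thesis using facet_plus_eq[OF F(1)] by blast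
qed

lemma v_ge: "F facet_of P \<Longrightarrow> F \<noteq> S \<Longrightarrow> nrm F \<bullet> v \<ge> off F"
  using v_other v_FF by (metis order.order_iff_strict)

lemma v_notP: "v \<notin> P"
  using v_S facet_ge[OF S_facet] by force

lemma facet_S_ridge:
  assumes "R facet_of S"
  shows "R face_of P" "aff_dim R = int DIM('a) - 2" "R \<noteq> {}" "R \<subseteq> S"
proof -
  show "R face_of P" using assms facet_of_imp_face_of face_of_trans S_face by blast
  show "aff_dim R = int DIM('a) - 2" using assms dimS by (simp add: facet_of_def)
  show "R \<noteq> {}" using assms by (simp add: facet_of_def)
  show "R \<subseteq> S" using assms facet_of_imp_subset by blast
qed

lemma facets_meet_ridge:
  assumes "F facet_of P" "G facet_of P" "F \<noteq> G" "R face_of P" "aff_dim R = int DIM('a) - 2"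
    "R \<subseteq> F \<inter> G"
  shows "F \<inter> G = R"
proof -
  have i: "(F \<inter> G) face_of P" using assms(1,2) facet_of_imp_face_of face_of_Int by blast
  have "aff_dim (F \<inter> G) < aff_dim F" using facets_Int_lt[OF convexP assms(1-3)] .
  moreover have "aff_dim R \<le> aff_dim (F \<inter> G)" using assms(6) aff_dim_subset by blast
  ultimately have "aff_dim R = aff_dim (F \<inter> G)" using assms(5) facet_dim[OF assms(1)] by simp
  then show ?thesis using same_dim_face[OF convexP assms(4) i assms(6)] by simp
qed

lemma other_facet:
  assumes "R facet_of S"
  shows "\<exists>F. F facet_of P \<and> F \<noteq> S \<and> F \<inter> S = R"
proof -
  note r = facet_S_ridge[OF assms]
  have "aff_dim R = aff_dim P - 2" using r(2) dimP by simp
  then obtain F where F: "F facet_of P" "F \<noteq> S" "R \<subseteq> F"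
    using ridge_other_facet[OF polyhP r(1) r(3) _ S_facet r(4)] by blast
  have "F \<inter> S = R"
    using facets_meet_ridge[OF F(1) S_facet F(2) r(1) r(2)] F(3) r(4) by blast
  then show ?thesis using F by blast
qed

lemma FF_ridge:
  assumes "F \<in> FF"
  shows "(F \<inter> S) facet_of S" "(F \<inter> S) face_of P" "aff_dim (F \<inter> S) = int DIM('a) - 2"
proof -
  note f = FF_facet[OF assms]
  show fp: "(F \<inter> S) face_of P" using f S_face facet_of_imp_face_of face_of_Int by blast
  show ad: "aff_dim (F \<inter> S) = int DIM('a) - 2" using f by (simp add: Int_commute)
  have "(F \<inter> S) face_of S" using face_of_subset[OF fp] S_sub by blast
  moreover have "F \<inter> S \<noteq> {}" using ad d3 by auto
  ultimately show "(F \<inter> S) facet_of S" using ad dimS by (simp add: facet_of_def)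
qed

lemma FF_inj:
  assumes "F1 \<in> FF" "F2 \<in> FF" "F1 \<inter> S = F2 \<inter> S"
  shows "F1 = F2"
proof (rule ccontr)
  assume ne: "F1 \<noteq> F2"
  note f1 = FF_facet[OF assms(1)] and f2 = FF_facet[OF assms(2)]
  have a: "S \<noteq> F1" "S \<noteq> F2" using f1 f2 by auto
  have b: "F1 \<inter> S \<subseteq> S" "F1 \<inter> S \<subseteq> F1" "F1 \<inter> S \<subseteq> F2" using assms(3) by auto
  show False
    by (rule ridge_unique[OF S_facet f1[THEN conjunct1] f2[THEN conjunct1] a ne b FF_ridge(3)[OF assms(1)]])
qed

lemma simplex_faces:
  assumes "X \<subseteq> cS" "2 \<le> card (cS - X)"
  shows "\<exists>R1 T. R1 facet_of S \<and> T face_of S \<and> T \<subseteq> R1 \<and> aff_dim T = int DIM('a) - 3 \<and> X \<subseteq> T"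
proof -
  obtain c1 c2 where c: "c1 \<in> cS - X" "c2 \<in> cS - X" "c1 \<noteq> c2"
    using card_two_elems[OF _ assms(2)] finite_cS by blast
  define R1 where "R1 = convex hull (cS - {c1})"
  define T where "T = convex hull (cS - {c1, c2})"
  have "c2 \<in> cS - {c1}" using c by blast
  then have "c2 \<in> R1" unfolding R1_def by (rule hull_inc)
  then have "R1 \<noteq> {}" by blast
  moreover have "\<exists>u. u \<in> cS \<and> R1 = convex hull (cS - {u})" using c unfolding R1_def by blast
  ultimately have "R1 facet_of (convex hull cS)"
    using facet_of_convex_hull_affine_independent[OF cS(1), THEN iffD2] by blast
  then have R1: "R1 facet_of S" using cS(3) by simp
  have "\<exists>c'. c' \<subseteq> cS \<and> T = convex hull c'" unfolding T_def by blast
  then have "T face_of (convex hull cS)"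
    by (rule face_of_convex_hull_affine_independent[OF cS(1), THEN iffD2])
  then have T: "T face_of S" using cS(3) by simp
  have TR: "T \<subseteq> R1" unfolding T_def R1_def by (rule hull_mono) blast
  have "card (cS - {c1, c2}) = DIM('a) - 2"
    using c cS(2) finite_cS by (simp add: card_Diff_subset)
  then have "aff_dim T = int DIM('a) - 3"
    using aff_dim_sub[of "cS - {c1,c2}"] d3 unfolding T_def by auto
  moreover have "X \<subseteq> T" using c assms(1) unfolding T_def by (auto intro: hull_inc)
  ultimately show ?thesis using R1 T TR by blast
qed

lemma facets_S_Int:
  assumes "R1 facet_of S" "R2 facet_of S" "R1 \<noteq> R2"
  shows "(R1 \<inter> R2) face_of S" "aff_dim (R1 \<inter> R2) = int DIM('a) - 3"
proof -
  have "R1 facet_of (convex hull cS)" using assms(1) cS(3) by simp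
  then have "\<exists>u. u \<in> cS \<and> R1 = convex hull (cS - {u})"
    using facet_of_convex_hull_affine_independent[OF cS(1), THEN iffD1] by blast
  then obtain u1 where u1: "u1 \<in> cS" "R1 = convex hull (cS - {u1})" by blast
  have "R2 facet_of (convex hull cS)" using assms(2) cS(3) by simp
  then have "\<exists>u. u \<in> cS \<and> R2 = convex hull (cS - {u})"
    using facet_of_convex_hull_affine_independent[OF cS(1), THEN iffD1] by blast
  then obtain u2 where u2: "u2 \<in> cS" "R2 = convex hull (cS - {u2})" by blast
  have u12: "u1 \<noteq> u2" using u1 u2 assms(3) by auto
  show fI: "(R1 \<inter> R2) face_of S"
    using assms(1,2) facet_of_imp_face_of face_of_Int by blast
  then have "(R1 \<inter> R2) face_of (convex hull cS)" using cS(3) by simp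
  then have "\<exists>c'. c' \<subseteq> cS \<and> R1 \<inter> R2 = convex hull c'"
    by (rule face_of_convex_hull_affine_independent[OF cS(1), THEN iffD1])
  then obtain c' where c': "c' \<subseteq> cS" "R1 \<inter> R2 = convex hull c'" by blast
  have notu: "u \<notin> convex hull (cS - {u})" if "u \<in> cS" for u
  proof
    assume "u \<in> convex hull (cS - {u})"
    then have "u \<in> affine hull (cS - {u})" using convex_hull_subset_affine_hull by blast
    then have "\<exists>x\<in>cS. x \<in> affine hull (cS - {x})" using that by blast
    then have "affine_dependent cS" unfolding affine_dependent_def .
    then show False using cS(1) by (rule rev_notE)
  qed
  have "c' \<subseteq> cS - {u1, u2}"
  proof
    fix x assume x: "x \<in> c'"
    have xR: "x \<in> R1 \<inter> R2" using x c'(2) hull_inc[of x c'] by simp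
    have "x \<noteq> u1"
    proof
      assume "x = u1"
      then have "u1 \<in> convex hull (cS - {u1})" using xR u1(2) by blast
      then show False using notu[OF u1(1)] by blast
    qed
    moreover have "x \<noteq> u2"
    proof
      assume "x = u2"
      then have "u2 \<in> convex hull (cS - {u2})" using xR u2(2) by blast
      then show False using notu[OF u2(1)] by blast
    qed
    ultimately show "x \<in> cS - {u1, u2}" using x c'(1) by blast
  qed
  moreover have "cS - {u1, u2} \<subseteq> c'"
  proof
    fix x assume x: "x \<in> cS - {u1, u2}"
    have "x \<in> cS - {u1}" "x \<in> cS - {u2}" using x by auto
    then have "x \<in> convex hull (cS - {u1})" "x \<in> convex hull (cS - {u2})"
      by (simp_all add: hull_inc)
    then have "x \<in> R1 \<inter> R2" using u1(2) u2(2) by simp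
    then have "x \<in> convex hull c'" using c'(2) by simp
    then have "x \<in> affine hull c'" using convex_hull_subset_affine_hull by blast
    then show "x \<in> c'" using indep_mem[OF cS(1) c'(1)] x by blast
  qed
  ultimately have "c' = cS - {u1, u2}" by blast
  moreover have "card (cS - {u1, u2}) = DIM('a) - 2"
    using u1 u2 u12 cS(2) finite_cS by (simp add: card_Diff_subset)
  ultimately show "aff_dim (R1 \<inter> R2) = int DIM('a) - 3"
    using aff_dim_sub[of c'] c' d3 by auto
qed

end


context setting begin

lemma key_contra:
  assumes R1: "R1 facet_of S" and T: "T face_of S" "T \<subseteq> R1" "aff_dim T = int DIM('a) - 3"
    and H: "\<And>G. G facet_of P \<Longrightarrow> T \<subseteq> G \<Longrightarrow> G \<noteq> S \<Longrightarrow> G \<in> FF"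
  shows False
proof -
  note r1 = facet_S_ridge[OF R1]
  obtain F1 where F1: "F1 facet_of P" "F1 \<noteq> S" "F1 \<inter> S = R1" using other_facet[OF R1] by blast
  have TF1: "T \<subseteq> F1" using T(2) F1(3) by blast
  have F1FF: "F1 \<in> FF" using H[OF F1(1) TF1 F1(2)] .
  have F1P: "F1 face_of P" using F1(1) facet_of_imp_face_of by blast
  have F1sub: "F1 \<subseteq> P" using F1(1) facet_of_imp_subset by blast
  have TP: "T face_of P" using face_of_trans[OF T(1) S_face] .
  have TonF1: "T face_of F1" using face_of_subset[OF TP TF1 F1sub] .
  have R1F1: "R1 face_of F1" using face_of_subset[OF r1(1) _ F1sub] F1(3) by blast
  have polyF1: "polyhedron F1"
    using face_of_polytope_polytope[OF polyP F1P] polytope_imp_polyhedron by blast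
  have dF1: "aff_dim F1 = int DIM('a) - 1" using facet_dim[OF F1(1)] .
  have R1facF1: "R1 facet_of F1"
    unfolding facet_of_def using R1F1 r1(2,3) dF1 by simp
  have Tne: "T \<noteq> {}" using T(3) d3 by auto
  have Tdim: "aff_dim T = aff_dim F1 - 2" using T(3) dF1 by simp
  obtain R' where R': "R' facet_of F1" "R' \<noteq> R1" "T \<subseteq> R'"
    using ridge_other_facet[OF polyF1 TonF1 Tne Tdim R1facF1 T(2)] by blast
  have R'P: "R' face_of P" using face_of_trans[OF facet_of_imp_face_of[OF R'(1)] F1P] .
  have R'dim: "aff_dim R' = int DIM('a) - 2" using R'(1) dF1 by (simp add: facet_of_def)
  have R'ne: "R' \<noteq> {}" using R'(1) by (simp add: facet_of_def)
  have R'F1: "R' \<subseteq> F1" using R'(1) facet_of_imp_subset by blast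
  have "aff_dim R' = aff_dim P - 2" using R'dim dimP by simp
  then obtain G where G: "G facet_of P" "G \<noteq> F1" "R' \<subseteq> G"
    using ridge_other_facet[OF polyhP R'P R'ne _ F1(1) R'F1] by blast
  have F1G: "F1 \<inter> G = R'"
    using facets_meet_ridge[OF F1(1) G(1) G(2)[symmetric] R'P R'dim] R'F1 G(3) by blast
  have GS: "G \<noteq> S"
  proof
    assume "G = S"
    then have "R' \<subseteq> R1" using F1G F1(3) by blast
    then have "R' = R1" using same_dim_face[OF convexP R'P r1(1)] R'dim r1(2) by simp
    with R'(2) show False by simp
  qed
  have GFF: "G \<in> FF" using H[OF G(1) _ GS] R'(3) G(3) by blast
  have adj: "adjacent_facets P F1 G"
    unfolding adjacent_facets_def using F1(1) G(1) G(2) F1G R'dim dimP by simp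
  have I1: "F1 \<inter> G \<inter> S = R' \<inter> R1" using F1G F1(3) R'F1 by blast
  have RR1P: "(R' \<inter> R1) face_of P" using face_of_Int[OF R'P r1(1)] .
  have "R' \<inter> R1 \<noteq> R1"
  proof
    assume "R' \<inter> R1 = R1"
    then have "R1 \<subseteq> R'" by blast
    then have "R1 = R'" using same_dim_face[OF convexP r1(1) R'P] R'dim r1(2) by simp
    with R'(2) show False by simp
  qed
  moreover have "(R' \<inter> R1) face_of R1"
  proof -
    have "R1 \<subseteq> P" using r1(4) S_sub by blast
    moreover have "R' \<inter> R1 \<subseteq> R1" by blast
    ultimately show ?thesis using face_of_subset[OF RR1P] by blast
  qed
  ultimately have "aff_dim (R' \<inter> R1) < aff_dim R1"
    using face_of_aff_dim_lt[OF face_of_imp_convex[OF r1(1)]] by blast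
  moreover have "aff_dim T \<le> aff_dim (R' \<inter> R1)" using R'(3) T(2) aff_dim_subset
    by (metis le_inf_iff)
  ultimately have "aff_dim T = aff_dim (R' \<inter> R1)" using r1(2) T(3) by simp
  moreover have "T \<subseteq> R' \<inter> R1" using R'(3) T(2) by blast
  ultimately have "T = R' \<inter> R1" using same_dim_face[OF convexP TP RR1P] by simp
  then have I2: "F1 \<inter> G \<inter> S = T" using I1 by simp
  have "\<exists>G\<in>FF. \<exists>G'\<in>FF. adjacent_facets P G G' \<and>
            (G \<inter> G' \<inter> S) face_of S \<and> aff_dim (G \<inter> G' \<inter> S) = aff_dim P - 3"
    using F1FF GFF adj I2 T(1) T(3) dimP by auto
  then show False using nons unfolding nonsimple_def by blast
qed

lemma edge_not_in_S:
  assumes e: "e edge_of P" and nS: "\<not> e \<subseteq> S"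
  shows "\<exists>F. F facet_of P \<and> F \<noteq> S \<and> F \<notin> FF \<and> e \<subseteq> F"
proof (rule ccontr)
  assume "\<not> ?thesis"
  then have H: "\<And>F. F facet_of P \<Longrightarrow> e \<subseteq> F \<Longrightarrow> F \<in> FF" using nS by blast
  have eP: "e face_of P" and ed: "aff_dim e = 1" using e by (auto simp: edge_of_def)
  have ene: "e \<noteq> {}" using ed by auto
  have "e \<noteq> P" using ed dimP d3 by auto
  then obtain F1 where F1: "F1 facet_of P" "e \<subseteq> F1"
    using face_of_polyhedron_subset_facet[OF polyhP eP ene] by blast
  have F1FF: "F1 \<in> FF" using H[OF F1] .
  have F1P: "F1 face_of P" using F1(1) facet_of_imp_face_of by blast
  have F1sub: "F1 \<subseteq> P" using F1(1) facet_of_imp_subset by blast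
  have eF1: "e face_of F1" using face_of_subset[OF eP F1(2) F1sub] .
  have polyF1: "polyhedron F1"
    using face_of_polytope_polytope[OF polyP F1P] polytope_imp_polyhedron by blast
  have "e \<noteq> F1" using ed facet_dim[OF F1(1)] d3 by auto
  then obtain R' where R': "R' facet_of F1" "e \<subseteq> R'"
    using face_of_polyhedron_subset_facet[OF polyF1 eF1 ene] by blast
  have R'P: "R' face_of P" using face_of_trans[OF facet_of_imp_face_of[OF R'(1)] F1P] .
  have R'dim: "aff_dim R' = int DIM('a) - 2" using R'(1) facet_dim[OF F1(1)] by (simp add: facet_of_def)
  have R'ne: "R' \<noteq> {}" using R'(1) by (simp add: facet_of_def)
  have R'F1: "R' \<subseteq> F1" using R'(1) facet_of_imp_subset by blast
  have "aff_dim R' = aff_dim P - 2" using R'dim dimP by simp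
  then obtain G where G: "G facet_of P" "G \<noteq> F1" "R' \<subseteq> G"
    using ridge_other_facet[OF polyhP R'P R'ne _ F1(1) R'F1] by blast
  have F1G: "F1 \<inter> G = R'"
    using facets_meet_ridge[OF F1(1) G(1) G(2)[symmetric] R'P R'dim] R'F1 G(3) by blast
  have GFF: "G \<in> FF" using H[OF G(1)] R'(2) G(3) by blast
  have adj: "adjacent_facets P F1 G"
    unfolding adjacent_facets_def using F1(1) G(1) G(2) F1G R'dim dimP by simp
  note q1 = FF_ridge[OF F1FF] and q2 = FF_ridge[OF GFF]
  have "F1 \<inter> S \<noteq> G \<inter> S"
  proof
    assume eq: "F1 \<inter> S = G \<inter> S"
    then have "F1 \<inter> S \<subseteq> R'" using F1G by blast
    then have "F1 \<inter> S = R'" using same_dim_face[OF convexP q1(2) R'P] q1(3) R'dim by simp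
    then have "e \<subseteq> S" using R'(2) by blast
    with nS show False by simp
  qed
  then have "(F1 \<inter> S \<inter> (G \<inter> S)) face_of S \<and> aff_dim (F1 \<inter> S \<inter> (G \<inter> S)) = int DIM('a) - 3"
    using facets_S_Int[OF q1(1) q2(1)] by blast
  moreover have "F1 \<inter> S \<inter> (G \<inter> S) = F1 \<inter> G \<inter> S" by blast
  ultimately have "\<exists>G\<in>FF. \<exists>G'\<in>FF. adjacent_facets P G G' \<and>
            (G \<inter> G' \<inter> S) face_of S \<and> aff_dim (G \<inter> G' \<inter> S) = aff_dim P - 3"
    using F1FF GFF adj dimP by auto
  then show False using nons unfolding nonsimple_def by blast
qed

lemma ext_S_in_cS: "v' extreme_point_of S \<Longrightarrow> v' \<in> cS"
  using extreme_point_of_convex_hull_affine_independent[OF cS(1)] cS(3) by simp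

lemma vertex_good:
  assumes "v' extreme_point_of S"
  shows "\<exists>G. G facet_of P \<and> v' \<in> G \<and> G \<noteq> S \<and> G \<notin> FF"
proof (rule ccontr)
  assume nh: "\<not> ?thesis"
  have vc: "v' \<in> cS" using ext_S_in_cS[OF assms] .
  have "card (cS - {v'}) = DIM('a) - 1" using vc cS(2) finite_cS by simp
  then have "2 \<le> card (cS - {v'})" using d3 by simp
  then obtain R1 T where RT: "R1 facet_of S" "T face_of S" "T \<subseteq> R1"
    "aff_dim T = int DIM('a) - 3" "{v'} \<subseteq> T"
    using simplex_faces[of "{v'}"] vc by blast
  show False
  proof (rule key_contra[OF RT(1-4)])
    fix G assume "G facet_of P" "T \<subseteq> G" "G \<noteq> S"
    then show "G \<in> FF" using nh RT(5) by blast
  qed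
qed

lemma edge_in_S_4:
  assumes d4: "DIM('a) \<ge> 4" and e: "e edge_of P" and eS: "e \<subseteq> S"
  shows "\<exists>F. F facet_of P \<and> F \<noteq> S \<and> F \<notin> FF \<and> e \<subseteq> F"
proof (rule ccontr)
  assume nh: "\<not> ?thesis"
  have eP: "e face_of P" and ed: "aff_dim e = 1" using e by (auto simp: edge_of_def)
  have "e face_of S" using face_of_subset[OF eP eS S_sub] .
  then have "e face_of convex hull cS" using cS(3) by simp
  then have "\<exists>c'. c' \<subseteq> cS \<and> e = convex hull c'"
    by (rule face_of_convex_hull_affine_independent[OF cS(1), THEN iffD1])
  then obtain c' where c': "c' \<subseteq> cS" "e = convex hull c'" by blast
  have "int (card c') - 1 = 1" using aff_dim_sub[OF c'(1)] c'(2) ed by simp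
  then have cc: "card c' = 2" by simp
  have fc': "finite c'" using c'(1) finite_cS finite_subset by blast
  have "card (cS - c') = DIM('a) - 2" using card_Diff_subset[OF fc' c'(1)] cc cS(2) by simp
  then have "2 \<le> card (cS - c')" using d4 by simp
  then obtain R1 T where RT: "R1 facet_of S" "T face_of S" "T \<subseteq> R1"
    "aff_dim T = int DIM('a) - 3" "c' \<subseteq> T"
    using simplex_faces[OF c'(1)] by blast
  have "e \<subseteq> T" using c'(2) RT(5) face_of_imp_convex[OF RT(2)] by (simp add: hull_minimal)
  show False
  proof (rule key_contra[OF RT(1-4)])
    fix G assume "G facet_of P" "T \<subseteq> G" "G \<noteq> S"
    then show "G \<in> FF" using nh \<open>e \<subseteq> T\<close> by blast
  qed
qed

lemma edge_in_S_3:
  assumes d: "DIM('a) = 3" and e: "e edge_of P" and eS: "e \<subseteq> S"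
    and H: "\<And>F. F facet_of P \<Longrightarrow> F \<noteq> S \<Longrightarrow> e \<subseteq> F \<Longrightarrow> F \<in> FF"
  shows "\<exists>F\<in>FF. e = F \<inter> S"
proof -
  have eP: "e face_of P" and ed: "aff_dim e = 1" using e by (auto simp: edge_of_def)
  have "e face_of S" using face_of_subset[OF eP eS S_sub] .
  moreover have "e \<noteq> {}" using ed by auto
  ultimately have "e facet_of S" unfolding facet_of_def using ed dimS d by simp
  then obtain F where F: "F facet_of P" "F \<noteq> S" "F \<inter> S = e" using other_facet by blast
  then have "F \<in> FF" using H by blast
  then show ?thesis using F(3) by blast
qed

lemma FF_edge3:
  assumes d: "DIM('a) = 3" and F: "F \<in> FF"
  shows "(F \<inter> S) edge_of P" "\<And>G. G facet_of P \<Longrightarrow> F \<inter> S \<subseteq> G \<Longrightarrow> G = S \<or> G = F"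
proof -
  note q = FF_ridge[OF F] and f = FF_facet[OF F]
  show "(F \<inter> S) edge_of P" unfolding edge_of_def using q d by simp
  fix G assume G: "G facet_of P" "F \<inter> S \<subseteq> G"
  show "G = S \<or> G = F"
  proof (rule ccontr)
    assume "\<not> (G = S \<or> G = F)"
    then have a: "S \<noteq> F" "S \<noteq> G" "F \<noteq> G" using f by auto
    have b: "F \<inter> S \<subseteq> S" "F \<inter> S \<subseteq> F" "F \<inter> S \<subseteq> G" using G(2) by auto
    show False
      by (rule ridge_unique[OF S_facet f[THEN conjunct1] G(1) a b q(3)])
  qed
qed

end


lemma comb_ge:
  fixes u a b c :: real
  assumes "0 \<le> u" "u \<le> 1" "a \<ge> c" "b \<ge> c"
  shows "u * a + (1 - u) * b \<ge> c"
proof -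
  have "u * (a - c) \<ge> 0" "(1 - u) * (b - c) \<ge> 0" using assms by simp_all
  then show ?thesis by (simp add: algebra_simps)
qed

lemma comb_eq:
  fixes u a b c :: real
  assumes "0 \<le> u" "u \<le> 1" "a \<ge> c" "b \<ge> c" "u * a + (1 - u) * b = c"
  shows "(u = 0 \<or> a = c) \<and> (u = 1 \<or> b = c)"
proof -
  have p: "u * (a - c) \<ge> 0" "(1 - u) * (b - c) \<ge> 0" using assms by simp_all
  have "u * (a - c) + (1 - u) * (b - c) = 0" using assms(5) by (simp add: algebra_simps)
  then have "u * (a - c) = 0" "(1 - u) * (b - c) = 0" using p by linarith+
  then show ?thesis by auto
qed

lemma inner_comb: "(g::'a::real_inner) \<bullet> (u *\<^sub>R x + (1 - u) *\<^sub>R y) = u * (g \<bullet> x) + (1 - u) * (g \<bullet> y)"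
  by (simp add: inner_add_right)

lemma extreme_subset:
  "x extreme_point_of Q \<Longrightarrow> S \<subseteq> Q \<Longrightarrow> x \<in> S \<Longrightarrow> x extreme_point_of S"
  by (auto simp: extreme_point_of_def)

context setting begin

abbreviation Q where "Q \<equiv> convex hull (insert v P)"

lemma convP_eq: "convex hull P = P" using convexP by (simp add: convex_hull_eq)

lemma Q_mem: "x \<in> Q \<longleftrightarrow> (\<exists>u p. 0 \<le> u \<and> u \<le> 1 \<and> p \<in> P \<and> x = u *\<^sub>R v + (1 - u) *\<^sub>R p)"
proof -
  have "x \<in> Q \<longleftrightarrow> (\<exists>u\<ge>0. \<exists>w\<ge>0. \<exists>b. u + w = 1 \<and> b \<in> convex hull P \<and> x = u *\<^sub>R v + w *\<^sub>R b)"
    using convex_hull_insert[OF P_ne, of v] by blast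
  also have "\<dots> \<longleftrightarrow> (\<exists>u p. 0 \<le> u \<and> u \<le> 1 \<and> p \<in> P \<and> x = u *\<^sub>R v + (1 - u) *\<^sub>R p)"
    unfolding convP_eq
  proof
    assume "\<exists>u\<ge>0. \<exists>w\<ge>0. \<exists>b. u + w = 1 \<and> b \<in> P \<and> x = u *\<^sub>R v + w *\<^sub>R b"
    then obtain u w b where "u \<ge> 0" "w \<ge> 0" "u + w = 1" "b \<in> P" "x = u *\<^sub>R v + w *\<^sub>R b" by blast
    moreover have "w = 1 - u" using \<open>u + w = 1\<close> by simp
    ultimately show "\<exists>u p. 0 \<le> u \<and> u \<le> 1 \<and> p \<in> P \<and> x = u *\<^sub>R v + (1 - u) *\<^sub>R p"
      by (intro exI[of _ u] exI[of _ b]) auto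
  next
    assume "\<exists>u p. 0 \<le> u \<and> u \<le> 1 \<and> p \<in> P \<and> x = u *\<^sub>R v + (1 - u) *\<^sub>R p"
    then obtain u p where "0 \<le> u" "u \<le> 1" "p \<in> P" "x = u *\<^sub>R v + (1 - u) *\<^sub>R p" by blast
    then show "\<exists>u\<ge>0. \<exists>w\<ge>0. \<exists>b. u + w = 1 \<and> b \<in> P \<and> x = u *\<^sub>R v + w *\<^sub>R b"
      by (intro exI[of _ u] conjI exI[of _ "1 - u"] exI[of _ p]) auto
  qed
  finally show ?thesis .
qed

lemma P_sub_Q: "P \<subseteq> Q" using hull_subset[of "insert v P" convex] by blast
lemma v_Q: "v \<in> Q" by (simp add: hull_inc)
lemma convexQ: "convex Q" by simp

lemma polyQ: "polytope Q"
proof -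
  obtain V where V: "finite V" "P = convex hull V" using polyP unfolding polytope_def by blast
  have "Q = convex hull (insert v V)" using V(2) hull_insert[of convex v V] by simp
  then show ?thesis unfolding polytope_def using V(1) by blast
qed

lemma compactQ: "compact Q" using polyQ polytope_imp_compact by blast

lemma dimQ: "aff_dim Q = int DIM('a)"
proof -
  have "aff_dim P \<le> aff_dim Q" using P_sub_Q aff_dim_subset by blast
  moreover have "aff_dim Q \<le> int DIM('a)" by (rule aff_dim_le_DIM)
  ultimately show ?thesis using dimP by simp
qed

lemma Q_half:
  assumes "\<And>p. p \<in> P \<Longrightarrow> g \<bullet> p \<ge> g0" "g \<bullet> v \<ge> g0" "x \<in> Q"
  shows "g \<bullet> x \<ge> g0"
proof -
  obtain u p where up: "0 \<le> u" "u \<le> 1" "p \<in> P" "x = u *\<^sub>R v + (1 - u) *\<^sub>R p"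
    using assms(3) Q_mem by blast
  show ?thesis unfolding up(4) inner_comb using comb_ge[OF up(1,2) assms(2) assms(1)[OF up(3)]] .
qed

lemma Q_eq_cases:
  assumes "\<And>p. p \<in> P \<Longrightarrow> g \<bullet> p \<ge> g0" "g \<bullet> v \<ge> g0" "x \<in> Q" "g \<bullet> x = g0"
  shows "\<exists>u p. 0 \<le> u \<and> u \<le> 1 \<and> p \<in> P \<and> x = u *\<^sub>R v + (1 - u) *\<^sub>R p \<and>
           (u = 0 \<or> g \<bullet> v = g0) \<and> (u = 1 \<or> g \<bullet> p = g0)"
proof -
  obtain u p where up: "0 \<le> u" "u \<le> 1" "p \<in> P" "x = u *\<^sub>R v + (1 - u) *\<^sub>R p"
    using assms(3) Q_mem by blast
  have "u * (g \<bullet> v) + (1 - u) * (g \<bullet> p) = g0" using assms(4) unfolding up(4) inner_comb .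
  then have "(u = 0 \<or> g \<bullet> v = g0) \<and> (u = 1 \<or> g \<bullet> p = g0)"
    using comb_eq[OF up(1,2) assms(2) assms(1)[OF up(3)]] by blast
  then show ?thesis using up by blast
qed

lemma v_face: "{v} face_of Q"
proof -
  have h1: "\<And>p. p \<in> P \<Longrightarrow> nrm S \<bullet> p \<ge> nrm S \<bullet> v"
    using facet_ge[OF S_facet] v_S by force
  have "Q \<inter> {y. nrm S \<bullet> y = nrm S \<bullet> v} = {v}"
  proof
    show "{v} \<subseteq> Q \<inter> {y. nrm S \<bullet> y = nrm S \<bullet> v}" using v_Q by blast
    show "Q \<inter> {y. nrm S \<bullet> y = nrm S \<bullet> v} \<subseteq> {v}"
    proof
      fix x assume x: "x \<in> Q \<inter> {y. nrm S \<bullet> y = nrm S \<bullet> v}"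
      then obtain u p where up: "0 \<le> u" "u \<le> 1" "p \<in> P" "x = u *\<^sub>R v + (1 - u) *\<^sub>R p"
        "u = 1 \<or> nrm S \<bullet> p = nrm S \<bullet> v"
        using Q_eq_cases[OF h1, of x] by auto
      have "nrm S \<bullet> p \<noteq> nrm S \<bullet> v" using h1 facet_ge[OF S_facet up(3)] v_S by force
      then have "u = 1" using up(5) by blast
      then show "x \<in> {v}" using up(4) by simp
    qed
  qed
  moreover have "(Q \<inter> {y. nrm S \<bullet> y = nrm S \<bullet> v}) face_of Q"
    by (rule face_of_Int_supporting_hyperplane_ge[OF convexQ]) (use Q_half h1 in blast)
  ultimately show ?thesis by simp
qed

lemma v_ext: "v extreme_point_of Q" using v_face face_of_singleton by blast

lemma edge_seg:
  assumes "E edge_of Q"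
  shows "\<exists>a b. E = closed_segment a b \<and> a \<noteq> b \<and> a extreme_point_of Q \<and> b extreme_point_of Q"
proof -
  have EQ: "E face_of Q" and ed: "aff_dim E = 1" using assms by (auto simp: edge_of_def)
  have "compact E" using face_of_imp_compact[OF convexQ compactQ EQ] .
  moreover have "convex E" using face_of_imp_convex[OF EQ] .
  moreover have "E \<noteq> {}" using ed by auto
  moreover have "collinear E" using ed by (simp add: collinear_aff_dim)
  ultimately obtain a b where ab: "E = closed_segment a b" using compact_convex_collinear_segment by blast
  have "a \<noteq> b" using ab ed by auto
  moreover have "a extreme_point_of E" "b extreme_point_of E"
    using ab extreme_point_of_segment by blast+
  then have "a extreme_point_of Q" "b extreme_point_of Q"
    using extreme_point_of_face[OF EQ] by blast+
  ultimately show ?thesis using ab by blast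
qed

lemma ext_Q: "x extreme_point_of Q \<Longrightarrow> x \<in> insert v P"
  by (rule extreme_point_of_convex_hull)

lemma edge_no_v:
  assumes E: "E edge_of Q" and nv: "v \<notin> E"
  shows "E edge_of P \<and> (\<exists>F. F facet_of P \<and> F \<noteq> S \<and> F \<notin> FF \<and> E \<subseteq> F)"
proof -
  have EQ: "E face_of Q" and ed: "aff_dim E = 1" using E by (auto simp: edge_of_def)
  obtain a b where ab: "E = closed_segment a b" "a extreme_point_of Q" "b extreme_point_of Q"
    using edge_seg[OF E] by blast
  have "a \<in> E" "b \<in> E" using ab(1) by auto
  then have "a \<noteq> v" "b \<noteq> v" using nv by auto
  then have "a \<in> P" "b \<in> P" using ext_Q[OF ab(2)] ext_Q[OF ab(3)] by auto
  then have EsubP: "E \<subseteq> P" using ab(1) closed_segment_subset convexP by blast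
  have EP: "E face_of P" using face_of_subset[OF EQ EsubP P_sub_Q] .
  have Eedge: "E edge_of P" using EP ed by (simp add: edge_of_def)
  show ?thesis
  proof (rule ccontr)
    assume "\<not> ?thesis"
    then have H: "\<And>F. F facet_of P \<Longrightarrow> E \<subseteq> F \<Longrightarrow> nrm F \<bullet> v \<le> off F"
      using Eedge v_other v_FF v_S by (metis order.strict_implies_order order_refl)
    have cE: "convex E" using face_of_imp_convex[OF EP] .
    have "E \<noteq> {}" using ed by auto
    then obtain x where x: "x \<in> rel_interior E" using rel_interior_eq_empty cE by blast
    have xE: "x \<in> E" using x rel_interior_subset by blast
    have xP: "x \<in> P" using xE EsubP by blast
    define I where "I = {F. F facet_of P \<and> \<not> E \<subseteq> F}"
    have finI: "finite I" unfolding I_def using finite_facets by (simp add: finite_subset)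
    have posI: "nrm F \<bullet> x - off F > 0" if "F \<in> I" for F
    proof -
      have F: "F facet_of P" "\<not> E \<subseteq> F" using that I_def by auto
      have fF: "F face_of P" using F(1) facet_of_imp_face_of by blast
      have i: "(E \<inter> F) face_of E"
        by (meson face_of_Int EP fF face_of_subset inf_le1 face_of_imp_subset)
      have "E \<inter> F \<noteq> E" using F(2) by blast
      then have "(E \<inter> F) \<inter> rel_interior E = {}" using face_of_disjoint_rel_interior i by blast
      then have "x \<notin> F" using x xE by blast
      then show ?thesis using facet_mem[OF F(1) xP] facet_ge[OF F(1) xP] by force
    qed
    obtain t where t: "t > 0" "\<And>s. 0 < s \<and> s \<le> t \<Longrightarrow> \<forall>F\<in>I. (nrm F \<bullet> x - off F) + s * (nrm F \<bullet> x - nrm F \<bullet> v) > 0"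
      using small_t[where I=I and c="\<lambda>F. nrm F \<bullet> x - off F" and d="\<lambda>F. nrm F \<bullet> x - nrm F \<bullet> v", OF finI posI] by blast
    define y where "y = x + t *\<^sub>R (x - v)"
    have yP: "y \<in> P"
    proof (rule in_P)
      fix F assume F: "F facet_of P"
      have ey: "nrm F \<bullet> y = nrm F \<bullet> x + t * (nrm F \<bullet> x - nrm F \<bullet> v)"
        unfolding y_def by (simp add: inner_add_right inner_diff_right)
      show "nrm F \<bullet> y \<ge> off F"
      proof (cases "E \<subseteq> F")
        case True
        then have "nrm F \<bullet> x = off F" using facet_mem'[OF F] xE by blast
        moreover have "nrm F \<bullet> v \<le> off F" using H[OF F True] .
        ultimately have "0 \<le> t * (off F - nrm F \<bullet> v)" "nrm F \<bullet> y = off F + t * (off F - nrm F \<bullet> v)"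
          using ey t(1) by (simp_all add: algebra_simps)
        then show ?thesis by linarith
      next
        case False
        then have "F \<in> I" using F I_def by blast
        then show ?thesis using t(2)[of t] t(1) ey by force
      qed
    qed
    have yv: "y \<noteq> v" using yP v_notP by blast
    define u where "u = t / (1 + t)"
    have u: "0 < u" "u < 1" using t(1) unfolding u_def by auto
    have "(1 - u) *\<^sub>R y + u *\<^sub>R v = x"
    proof -
      have "1 - u = 1 / (1 + t)" using t(1) unfolding u_def by (simp add: field_simps)
      then have "(1 - u) *\<^sub>R y + u *\<^sub>R v = (1 / (1 + t)) *\<^sub>R (y + t *\<^sub>R v)"
        unfolding u_def by (simp add: scaleR_add_right divide_inverse)
      also have "y + t *\<^sub>R v = (1 + t) *\<^sub>R x"
        unfolding y_def by (simp add: algebra_simps)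
      finally show ?thesis using t(1) by simp
    qed
    then have "x \<in> open_segment y v" using u yv unfolding in_segment(2) by metis
    moreover have "y \<in> Q" using yP P_sub_Q by blast
    ultimately have "v \<in> E" using EQ xE v_Q unfolding face_of_def by blast
    with nv show False by simp
  qed
qed

end


lemma aff_dim_seg: "a \<noteq> b \<Longrightarrow> aff_dim (closed_segment a (b::'a::euclidean_space)) = 1"
  by (simp add: segment_convex_hull aff_dim_convex_hull)

context setting begin

lemma edge_with_v:
  assumes E: "E edge_of Q" and vE: "v \<in> E"
  shows "\<exists>v'. v' extreme_point_of S \<and> E = closed_segment v v'"
proof -
  have EQ: "E face_of Q" and ed: "aff_dim E = 1" using E by (auto simp: edge_of_def)
  obtain a b where ab: "E = closed_segment a b" "a \<noteq> b" "a extreme_point_of Q" "b extreme_point_of Q"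
    using edge_seg[OF E] by blast
  have "v extreme_point_of E" using extreme_point_of_face[OF EQ] v_ext vE by blast
  then have "v = a \<or> v = b" using ab(1) extreme_point_of_segment by blast
  then obtain w where w: "E = closed_segment v w" "w \<noteq> v" "w extreme_point_of Q"
    using ab by (metis closed_segment_commute)
  have wP: "w \<in> P" using ext_Q[OF w(3)] w(2) by blast
  have wS: "w \<in> S"
  proof (rule ccontr)
    assume wnS: "w \<notin> S"
    have gtw: "nrm S \<bullet> w > off S"
      using facet_mem[OF S_facet wP] facet_ge[OF S_facet wP] wnS by force
    have vS: "nrm S \<bullet> v < off S" by (rule v_S)
    define t where "t = (nrm S \<bullet> w - off S) / (nrm S \<bullet> w - nrm S \<bullet> v)"
    have t: "0 < t" "t < 1" using gtw vS unfolding t_def by (auto simp: field_simps)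
    define z where "z = t *\<^sub>R v + (1 - t) *\<^sub>R w"
    have zS: "nrm S \<bullet> z = off S"
    proof -
      have "nrm S \<bullet> z = t * (nrm S \<bullet> v) + (1 - t) * (nrm S \<bullet> w)" unfolding z_def by (rule inner_comb)
      also have "\<dots> = nrm S \<bullet> w - t * (nrm S \<bullet> w - nrm S \<bullet> v)" by (simp add: algebra_simps)
      also have "t * (nrm S \<bullet> w - nrm S \<bullet> v) = nrm S \<bullet> w - off S"
        unfolding t_def using gtw vS by (simp add: field_simps)
      finally show ?thesis by simp
    qed
    have zP: "z \<in> P"
    proof (rule in_P)
      fix F assume F: "F facet_of P"
      show "nrm F \<bullet> z \<ge> off F"
      proof (cases "F = S")
        case True then show ?thesis using zS by simp
      next
        case False
        show ?thesis unfolding z_def inner_comb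
          using comb_ge[where u=t and a="nrm F \<bullet> v" and b="nrm F \<bullet> w" and c="off F"]
            t v_ge[OF F False] facet_ge[OF F wP] by simp
      qed
    qed
    have zE: "z \<in> E"
    proof -
      have "z = (1 - (1 - t)) *\<^sub>R v + (1 - t) *\<^sub>R w" unfolding z_def by simp
      then show ?thesis unfolding w(1) in_segment(1) using t by (intro exI[of _ "1 - t"]) auto
    qed
    have zw: "z \<noteq> w"
    proof
      assume "z = w"
      then have "t *\<^sub>R v + (1 - t) *\<^sub>R w = w" unfolding z_def .
      then have "t *\<^sub>R (v - w) = 0" by (simp add: algebra_simps)
      then show False using t w(2) by simp
    qed
    have EP: "(E \<inter> P) face_of P" using face_Int_subset[OF EQ P_sub_Q convexP] .
    have "aff_dim (E \<inter> P) \<le> 1" using ed aff_dim_subset[of "E \<inter> P" E] by simp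
    moreover have "aff_dim {w, z} \<le> aff_dim (E \<inter> P)"
      using zE zP wP w(1) by (intro aff_dim_subset) auto
    then have "1 \<le> aff_dim (E \<inter> P)" using zw by simp
    ultimately have "(E \<inter> P) edge_of P" using EP by (simp add: edge_of_def)
    moreover have "\<not> E \<inter> P \<subseteq> S" using wnS wP w(1) by auto
    ultimately obtain F where F: "F facet_of P" "F \<noteq> S" "F \<notin> FF" "E \<inter> P \<subseteq> F"
      using edge_not_in_S by blast
    have "w \<in> F" "z \<in> F" using F(4) w(1) wP zE zP by auto
    then have e1: "nrm F \<bullet> w = off F" "nrm F \<bullet> z = off F" using facet_mem'[OF F(1)] by auto
    have gv: "nrm F \<bullet> v > off F" using v_other[OF F(1-3)] .
    have "nrm F \<bullet> z = t * (nrm F \<bullet> v) + (1 - t) * off F" unfolding z_def inner_comb e1(1) ..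
    then have "nrm F \<bullet> z - off F = t * (nrm F \<bullet> v - off F)" by (simp add: algebra_simps)
    moreover have "t * (nrm F \<bullet> v - off F) > 0" using t gv by simp
    ultimately show False using e1(2) by linarith
  qed
  have "w extreme_point_of S" using extreme_subset[OF w(3) _ wS] S_sub P_sub_Q by blast
  then show ?thesis using w(1) by blast
qed

lemma seg_edge:
  assumes v': "v' extreme_point_of S"
  shows "closed_segment v v' edge_of Q"
proof -
  have v'S: "v' \<in> S" using v' extreme_point_of_def by blast
  have v'P: "v' \<in> P" using v'S S_sub by blast
  have v'ext: "v' extreme_point_of P" using extreme_point_of_face[OF S_face] v' by blast
  define GG where "GG = {G. G facet_of P \<and> v' \<in> G}"
  have fin: "finite GG" unfolding GG_def using finite_facets by (simp add: finite_subset)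
  obtain G0 where G0: "G0 facet_of P" "v' \<in> G0" "G0 \<noteq> S" "G0 \<notin> FF" using vertex_good[OF v'] by blast
  define \<delta> where "\<delta> G = nrm G \<bullet> v - off G" for G
  have SG: "S \<in> GG" unfolding GG_def using S_facet v'S by blast
  have G0G: "G0 \<in> GG - {S}" unfolding GG_def using G0 by blast
  have dnn: "\<delta> G \<ge> 0" if "G \<in> GG - {S}" for G
    using that v_ge unfolding GG_def \<delta>_def by auto
  have dpos0: "\<delta> G0 > 0" using v_other[OF G0(1) G0(3) G0(4)] unfolding \<delta>_def by simp
  define sig where "sig = sum \<delta> (GG - {S})"
  have sigpos: "sig > 0"
    unfolding sig_def using sum_pos2[where f=\<delta>, OF _ G0G dpos0 dnn] fin by blast
  have dS: "\<delta> S < 0" using v_S unfolding \<delta>_def by simp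
  define \<mu> where "\<mu> G = (if G = S then sig / (- \<delta> S) else 1)" for G
  have mupos: "\<mu> G > 0" for G using sigpos dS unfolding \<mu>_def by (simp add: divide_pos_neg)
  define g where "g = (\<Sum>G\<in>GG. \<mu> G *\<^sub>R nrm G)"
  define g0 where "g0 = (\<Sum>G\<in>GG. \<mu> G * off G)"
  have key: "g \<bullet> x - g0 = (\<Sum>G\<in>GG. \<mu> G * (nrm G \<bullet> x - off G))" for x
    unfolding g_def g0_def by (simp add: inner_sum_left sum_subtractf right_diff_distrib)
  have gv: "g \<bullet> v = g0"
  proof -
    have "g \<bullet> v - g0 = (\<Sum>G\<in>GG. \<mu> G * \<delta> G)" unfolding key \<delta>_def ..
    also have "\<dots> = \<mu> S * \<delta> S + (\<Sum>G\<in>GG - {S}. \<mu> G * \<delta> G)" using sum.remove[OF fin SG] .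
    also have "(\<Sum>G\<in>GG - {S}. \<mu> G * \<delta> G) = sig" unfolding sig_def \<mu>_def by simp
    also have "\<mu> S * \<delta> S = - sig" unfolding \<mu>_def using dS by simp
    finally show ?thesis by simp
  qed
  have terms_nn: "\<mu> G * (nrm G \<bullet> p - off G) \<ge> 0" if "p \<in> P" "G \<in> GG" for p G
    using that mupos[of G] facet_ge[of G p] unfolding GG_def by simp
  have gp: "g \<bullet> p \<ge> g0" if "p \<in> P" for p
  proof -
    have "g \<bullet> p - g0 \<ge> 0" unfolding key using terms_nn[OF that] by (simp add: sum_nonneg)
    then show ?thesis by simp
  qed
  have inter: "{v'} = \<Inter>GG"
  proof -
    have "{v'} face_of P" using v'ext face_of_singleton by blast
    moreover have "{v'} \<noteq> P" using dimP d3 by auto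
    ultimately have "{v'} = \<Inter>{F. F facet_of P \<and> {v'} \<subseteq> F}"
      using face_of_polyhedron[OF polyhP] by blast
    then show ?thesis unfolding GG_def by simp
  qed
  have gpeq: "p = v'" if "p \<in> P" "g \<bullet> p = g0" for p
  proof -
    have "(\<Sum>G\<in>GG. \<mu> G * (nrm G \<bullet> p - off G)) = 0" using key[of p] that(2) by simp
    moreover have "\<And>G. G \<in> GG \<Longrightarrow> 0 \<le> \<mu> G * (nrm G \<bullet> p - off G)"
      using terms_nn[OF that(1)] by blast
    ultimately have all0: "\<forall>G\<in>GG. \<mu> G * (nrm G \<bullet> p - off G) = 0"
      using sum_nonneg_eq_0_iff[OF fin, where f="\<lambda>G. \<mu> G * (nrm G \<bullet> p - off G)"] by blast
    have "\<forall>G\<in>GG. p \<in> G"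
    proof
      fix G assume G: "G \<in> GG"
      have "\<mu> G * (nrm G \<bullet> p - off G) = 0" using all0 G by blast
      then have "nrm G \<bullet> p = off G" using mupos[of G] by simp
      moreover have "G facet_of P" using G unfolding GG_def by blast
      ultimately show "p \<in> G" using facet_mem[of G p] that(1) by blast
    qed
    then have "p \<in> \<Inter>GG" by blast
    then show ?thesis using inter by blast
  qed
  have hyp: "Q \<inter> {y. g \<bullet> y = g0} = closed_segment v v'"
  proof
    show "Q \<inter> {y. g \<bullet> y = g0} \<subseteq> closed_segment v v'"
    proof
      fix x assume x: "x \<in> Q \<inter> {y. g \<bullet> y = g0}"
      then obtain u p where up: "0 \<le> u" "u \<le> 1" "p \<in> P" "x = u *\<^sub>R v + (1 - u) *\<^sub>R p"
        "u = 1 \<or> g \<bullet> p = g0"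
        using Q_eq_cases[OF gp, of x] gv x by auto
      show "x \<in> closed_segment v v'"
      proof (cases "u = 1")
        case True then show ?thesis using up(4) by simp
      next
        case False
        then have "p = v'" using up(5) gpeq[OF up(3)] by blast
        then have "x = (1 - (1 - u)) *\<^sub>R v + (1 - u) *\<^sub>R v'" using up(4) by simp
        then show ?thesis unfolding in_segment(1) using up(1,2) by (intro exI[of _ "1 - u"]) auto
      qed
    qed
    have cvx: "convex (Q \<inter> {y. g \<bullet> y = g0})" by (simp add: convex_Int convex_hyperplane)
    have "v \<in> Q \<inter> {y. g \<bullet> y = g0}" using v_Q gv by blast
    moreover have "v' \<in> Q \<inter> {y. g \<bullet> y = g0}"
    proof -
      have "\<forall>G\<in>GG. nrm G \<bullet> v' - off G = 0" using facet_mem' unfolding GG_def by simp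
      then have "g \<bullet> v' - g0 = 0" unfolding key by simp
      then have "g \<bullet> v' = g0" by simp
      moreover have "v' \<in> Q" using v'P P_sub_Q by blast
      ultimately show ?thesis by blast
    qed
    ultimately show "closed_segment v v' \<subseteq> Q \<inter> {y. g \<bullet> y = g0}"
      by (rule closed_segment_subset[OF _ _ cvx])
  qed
  have "(Q \<inter> {y. g \<bullet> y = g0}) face_of Q"
    by (rule face_of_Int_supporting_hyperplane_ge[OF convexQ]) (use Q_half gp gv in auto)
  then have "closed_segment v v' face_of Q" using hyp by simp
  moreover have "v \<noteq> v'" using v'P v_notP by blast
  ultimately show ?thesis using aff_dim_seg by (simp add: edge_of_def)
qed

end


context setting begin

lemma KQ:
  assumes K: "K facet_of Q" and vK: "v \<in> K"
  shows "(K \<inter> P) face_of P" "K = Q \<inter> affine hull (insert v (K \<inter> P))"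
    "(K \<inter> P) \<in> FF \<or> ((K \<inter> P) facet_of S \<and> (\<forall>F\<in>FF. \<not> (K \<inter> P) \<subseteq> F))"
proof -
  define G where "G = K \<inter> P"
  have KQf: "K face_of Q" using K facet_of_imp_face_of by blast
  have Kne: "K \<noteq> {}" using K by (simp add: facet_of_def)
  have Kd: "aff_dim K = int DIM('a) - 1" using K dimQ by (simp add: facet_of_def)
  have "K exposed_face_of Q"
    using exposed_face_of_polyhedron[OF polytope_imp_polyhedron[OF polyQ]] KQf by blast
  then obtain c c0 where cc: "Q \<subseteq> {x. c \<bullet> x \<le> c0}" "K = Q \<inter> {x. c \<bullet> x = c0}"
    unfolding exposed_face_of_def by blast
  define g where "g = - c"
  define g0 where "g0 = - c0"
  have Qg: "\<And>x. x \<in> Q \<Longrightarrow> g \<bullet> x \<ge> g0" using cc(1) unfolding g_def g0_def by auto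
  have Keq: "K = Q \<inter> {x. g \<bullet> x = g0}" using cc(2) unfolding g_def g0_def by auto
  have gv: "g \<bullet> v = g0" using vK Keq by blast
  have gne: "g \<noteq> 0"
  proof
    assume "g = 0"
    then have "g0 = 0" using gv by simp
    then have "K = Q" using Keq \<open>g = 0\<close> by auto
    then show False using Kd dimQ by simp
  qed
  have Ghyp: "insert v G \<subseteq> {x. g \<bullet> x = g0}" using gv Keq unfolding G_def by blast
  have KsubH: "K \<subseteq> convex hull (insert v G)"
  proof
    fix x assume xK: "x \<in> K"
    then have xQ: "x \<in> Q" and gx: "g \<bullet> x = g0" using Keq by auto
    have QgP: "\<And>p. p \<in> P \<Longrightarrow> g \<bullet> p \<ge> g0" using Qg P_sub_Q by blast
    obtain u p where up: "0 \<le> u" "u \<le> 1" "p \<in> P" "x = u *\<^sub>R v + (1 - u) *\<^sub>R p"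
        "u = 1 \<or> g \<bullet> p = g0"
      using Q_eq_cases[OF QgP _ xQ gx] gv by auto
    have vH: "v \<in> convex hull (insert v G)" by (simp add: hull_inc)
    show "x \<in> convex hull (insert v G)"
    proof (cases "u = 1")
      case True then show ?thesis using up(4) vH by simp
    next
      case False
      then have "g \<bullet> p = g0" using up(5) by blast
      then have "p \<in> G" using up(3) P_sub_Q Keq unfolding G_def by blast
      then have pH: "p \<in> convex hull (insert v G)" by (simp add: hull_inc)
      show ?thesis unfolding up(4)
        by (rule convexD[OF convex_convex_hull vH pH]) (use up in auto)
    qed
  qed
  have d1: "aff_dim K \<le> aff_dim (insert v G)"
    using aff_dim_subset[OF KsubH] by (simp add: aff_dim_convex_hull)
  have d2: "aff_dim (insert v G) \<le> int DIM('a) - 1"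
    using aff_dim_subset[OF Ghyp] gne by simp
  have dG: "aff_dim (insert v G) = int DIM('a) - 1" using d1 d2 Kd by simp
  have AH: "affine hull (insert v G) = {x. g \<bullet> x = g0}"
  proof (rule affine_dim_equal)
    show "affine (affine hull (insert v G))" by simp
    show "affine {x. g \<bullet> x = g0}" by (rule affine_hyperplane)
    show "affine hull (insert v G) \<noteq> {}" by simp
    show "affine hull (insert v G) \<subseteq> {x. g \<bullet> x = g0}"
      using Ghyp by (simp add: hull_minimal affine_hyperplane)
    show "aff_dim (affine hull (insert v G)) = aff_dim {x. g \<bullet> x = g0}"
      using dG gne by simp
  qed
  show KK: "K = Q \<inter> affine hull (insert v (K \<inter> P))" using Keq AH unfolding G_def by simp
  show GP: "(K \<inter> P) face_of P" using face_Int_subset[OF KQf P_sub_Q convexP] .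
  have GP': "G face_of P" using GP unfolding G_def .
  have GneP: "G \<noteq> P"
  proof
    assume "G = P"
    then have "P \<subseteq> K" unfolding G_def by blast
    then have "aff_dim P \<le> aff_dim K" by (rule aff_dim_subset)
    then show False using Kd dimP by simp
  qed
  have Glt: "aff_dim G < int DIM('a)" using face_of_aff_dim_lt[OF convexP GP' GneP] dimP by simp
  have ins: "aff_dim (insert v G) = (if v \<in> affine hull G then aff_dim G else aff_dim G + 1)"
    by (rule aff_dim_insert)
  show "(K \<inter> P) \<in> FF \<or> ((K \<inter> P) facet_of S \<and> (\<forall>F\<in>FF. \<not> (K \<inter> P) \<subseteq> F))"
  proof (cases "v \<in> affine hull G")
    case True
    then have aG: "aff_dim G = int DIM('a) - 1" using ins dG by simp
    then have "G \<noteq> {}" using d3 by auto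
    then have Gf: "G facet_of P" unfolding facet_of_def using GP' aG dimP by simp
    have nv: "nrm G \<bullet> v = off G" using facet_aff[OF Gf] True by blast
    have "G \<noteq> S" using nv v_S by auto
    then have "G \<in> FF" using v_other[OF Gf] nv by force
    then show ?thesis unfolding G_def by blast
  next
    case False
    then have aG: "aff_dim G = int DIM('a) - 2" using ins dG by simp
    then have Gne: "G \<noteq> {}" using d3 by auto
    have noFF: "\<forall>F\<in>FF. \<not> G \<subseteq> F"
    proof (intro ballI notI)
      fix F assume F: "F \<in> FF" and GF: "G \<subseteq> F"
      have Ff: "F facet_of P" using FF_facet[OF F] by blast
      have "v \<in> affine hull F" using facet_aff[OF Ff] v_FF[OF F] by blast
      moreover have "G \<subseteq> affine hull F" using GF hull_subset[of F affine] by blast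
      ultimately have "insert v G \<subseteq> affine hull F" by blast
      then have sub: "affine hull (insert v G) \<subseteq> affine hull F" by (simp add: hull_minimal)
      have "affine hull (insert v G) = affine hull F"
      proof (rule affine_dim_equal)
        show "affine (affine hull (insert v G))" "affine (affine hull F)" by simp_all
        show "affine hull (insert v G) \<noteq> {}" by simp
        show "affine hull (insert v G) \<subseteq> affine hull F" by (rule sub)
        show "aff_dim (affine hull (insert v G)) = aff_dim (affine hull F)"
          using dG facet_dim[OF Ff] by simp
      qed
      then have "F \<subseteq> Q \<inter> affine hull (insert v G)"
        using facet_of_imp_subset[OF Ff] P_sub_Q hull_subset[of F affine] by blast
      then have "F \<subseteq> K" using KK unfolding G_def by blast
      then have "F \<subseteq> G" using facet_of_imp_subset[OF Ff] unfolding G_def by blast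
      then have "aff_dim F \<le> aff_dim G" by (rule aff_dim_subset)
      then show False using facet_dim[OF Ff] aG by simp
    qed
    have ex: "\<exists>F. F facet_of P \<and> G \<subseteq> F \<and> nrm F \<bullet> v \<le> off F"
    proof (rule ccontr)
      assume nex: "\<not> ?thesis"
      have H: "nrm F \<bullet> v > off F" if "F facet_of P" "G \<subseteq> F" for F
      proof -
        have "\<not> nrm F \<bullet> v \<le> off F" using nex that by blast
        then show ?thesis by simp
      qed
      have cG: "convex G" using face_of_imp_convex[OF GP'] .
      obtain x where x: "x \<in> rel_interior G" using rel_interior_eq_empty cG Gne by blast
      have xG: "x \<in> G" using x rel_interior_subset by blast
      have xP: "x \<in> P" and xK: "x \<in> K" using xG unfolding G_def by auto
      define I where "I = {F. F facet_of P \<and> \<not> G \<subseteq> F}"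
      have finI: "finite I" unfolding I_def using finite_facets by (simp add: finite_subset)
      have posI: "nrm F \<bullet> x - off F > 0" if "F \<in> I" for F
      proof -
        have F: "F facet_of P" "\<not> G \<subseteq> F" using that I_def by auto
        have fF: "F face_of P" using F(1) facet_of_imp_face_of by blast
        have i: "(G \<inter> F) face_of G"
          by (meson face_of_Int GP' fF face_of_subset inf_le1 face_of_imp_subset)
        have "G \<inter> F \<noteq> G" using F(2) by blast
        then have "(G \<inter> F) \<inter> rel_interior G = {}" using face_of_disjoint_rel_interior i by blast
        then have "x \<notin> F" using x xG by blast
        then show ?thesis using facet_mem[OF F(1) xP] facet_ge[OF F(1) xP] by force
      qed
      obtain t where t: "t > 0" "\<And>s. 0 < s \<and> s \<le> t \<Longrightarrow> \<forall>F\<in>I. (nrm F \<bullet> x - off F) + s * (nrm F \<bullet> v - nrm F \<bullet> x) > 0"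
        using small_t[where I=I and c="\<lambda>F. nrm F \<bullet> x - off F" and d="\<lambda>F. nrm F \<bullet> v - nrm F \<bullet> x", OF finI posI] by blast
      define s where "s = min t (1/2)"
      have s: "0 < s" "s \<le> t" "s \<le> 1/2" using t(1) unfolding s_def by auto
      define y where "y = s *\<^sub>R v + (1 - s) *\<^sub>R x"
      have ey: "nrm F \<bullet> y = s * (nrm F \<bullet> v) + (1 - s) * (nrm F \<bullet> x)" for F
        unfolding y_def by (rule inner_comb)
      have yP: "y \<in> P"
      proof (rule in_P)
        fix F assume F: "F facet_of P"
        show "nrm F \<bullet> y \<ge> off F"
        proof (cases "G \<subseteq> F")
          case True
          then have "nrm F \<bullet> x = off F" using facet_mem'[OF F] xG by blast
          moreover have "nrm F \<bullet> v > off F" using H[OF F True] .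
          ultimately have "nrm F \<bullet> y - off F = s * (nrm F \<bullet> v - off F)" "s * (nrm F \<bullet> v - off F) > 0"
            using ey[of F] s by (simp_all add: algebra_simps)
          then show ?thesis by linarith
        next
          case False
          then have "F \<in> I" using F I_def by blast
          then have "(nrm F \<bullet> x - off F) + s * (nrm F \<bullet> v - nrm F \<bullet> x) > 0" using t(2)[of s] s by blast
          moreover have "nrm F \<bullet> y = (nrm F \<bullet> x) + s * (nrm F \<bullet> v - nrm F \<bullet> x)"
            using ey[of F] by (simp add: algebra_simps)
          ultimately show ?thesis by linarith
        qed
      qed
      have yK: "y \<in> K"
        unfolding y_def by (rule convexD[OF face_of_imp_convex[OF KQf] vK xK]) (use s in auto)
      have yG: "y \<in> G" using yK yP unfolding G_def by blast
      have "(1/s) *\<^sub>R y + (1 - 1/s) *\<^sub>R x \<in> affine hull G"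
        by (rule mem_affine[OF affine_affine_hull]) (use xG yG hull_subset[of G affine] in auto)
      moreover have "(1/s) *\<^sub>R y + (1 - 1/s) *\<^sub>R x = v"
      proof -
        have "(1/s) *\<^sub>R y = v + ((1 - s)/s) *\<^sub>R x"
          unfolding y_def using s(1) by (simp add: scaleR_add_right)
        moreover have "(1 - s)/s + (1 - 1/s) = 0" using s(1) by (simp add: field_simps)
        moreover have "((1 - s)/s) *\<^sub>R x + (1 - 1/s) *\<^sub>R x = ((1 - s)/s + (1 - 1/s)) *\<^sub>R x"
          by (rule scaleR_left_distrib[symmetric])
        ultimately show ?thesis by (simp add: algebra_simps)
      qed
      ultimately have "v \<in> affine hull G" by simp
      with False show False by simp
    qed
    then obtain F where F: "F facet_of P" "G \<subseteq> F" "nrm F \<bullet> v \<le> off F" by blast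
    have "F = S"
    proof (rule ccontr)
      assume "F \<noteq> S"
      moreover have "F \<notin> FF" using noFF F(2) by blast
      ultimately have "nrm F \<bullet> v > off F" using v_other[OF F(1)] by blast
      with F(3) show False by simp
    qed
    then have GS: "G \<subseteq> S" using F(2) by simp
    have "G face_of S" using face_of_subset[OF GP' GS S_sub] .
    then have "G facet_of S" unfolding facet_of_def using Gne aG dimS by simp
    then show ?thesis using noFF unfolding G_def by blast
  qed
qed

end


context setting begin

lemma fdeg_eq:
  assumes v': "v' extreme_point_of S"
  shows "fdeg Q (closed_segment v v') = fdeg S {v'}"
proof -
  define A where "A = {K. K facet_of Q \<and> closed_segment v v' \<subseteq> K}"
  define B where "B = {R. R facet_of S \<and> {v'} \<subseteq> R}"
  have v'S: "v' \<in> S" using v' extreme_point_of_def by blast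
  have v'P: "v' \<in> P" using v'S S_sub by blast
  have KS: "K \<inter> S = (K \<inter> P) \<inter> S" for K using S_sub by blast
  have inA: "K facet_of Q \<and> v \<in> K \<and> v' \<in> K" if "K \<in> A" for K
    using that unfolding A_def using ends_in_segment by blast
  have KSeq: "(K \<inter> P \<in> FF \<and> (K \<inter> S) facet_of S) \<or>
      ((K \<inter> P) facet_of S \<and> (\<forall>F\<in>FF. \<not> K \<inter> P \<subseteq> F) \<and> K \<inter> S = K \<inter> P)" if "K \<in> A" for K
  proof -
    have k: "K facet_of Q" "v \<in> K" using inA[OF that] by auto
    show ?thesis
    proof (cases "K \<inter> P \<in> FF")
      case True
      then have "((K \<inter> P) \<inter> S) facet_of S" using FF_ridge(1) by blast
      then show ?thesis using True KS[of K] by simp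
    next
      case False
      then have f: "(K \<inter> P) facet_of S" "\<forall>F\<in>FF. \<not> K \<inter> P \<subseteq> F" using KQ(3)[OF k] by auto
      then have "K \<inter> P \<subseteq> S" using facet_of_imp_subset by blast
      then have "K \<inter> S = K \<inter> P" using KS[of K] by blast
      then show ?thesis using f by blast
    qed
  qed
  have maps: "K \<inter> S \<in> B" if "K \<in> A" for K
  proof -
    have "(K \<inter> S) facet_of S" using KSeq[OF that] by auto
    moreover have "v' \<in> K \<inter> S" using inA[OF that] v'S by blast
    ultimately show ?thesis unfolding B_def by blast
  qed
  have inj: "inj_on (\<lambda>K. K \<inter> S) A"
  proof (rule inj_onI)
    fix K1 K2 assume K1: "K1 \<in> A" and K2: "K2 \<in> A" and eq: "K1 \<inter> S = K2 \<inter> S"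
    have GG: "K1 \<inter> P = K2 \<inter> P"
    proof -
      note c1 = KSeq[OF K1] and c2 = KSeq[OF K2]
      show ?thesis
      proof (cases "K1 \<inter> P \<in> FF")
        case T1: True
        show ?thesis
        proof (cases "K2 \<inter> P \<in> FF")
          case True
          have "(K1 \<inter> P) \<inter> S = (K2 \<inter> P) \<inter> S" using eq KS by metis
          then show ?thesis using FF_inj[OF T1 True] by blast
        next
          case False
          then have f: "(\<forall>F\<in>FF. \<not> K2 \<inter> P \<subseteq> F)" "K2 \<inter> S = K2 \<inter> P" using c2 by auto
          have "K2 \<inter> P \<subseteq> K1 \<inter> P" using f(2) eq by blast
          then show ?thesis using f(1) T1 by blast
        qed
      next
        case F1: False
        then have f1: "(\<forall>F\<in>FF. \<not> K1 \<inter> P \<subseteq> F)" "K1 \<inter> S = K1 \<inter> P" using c1 by auto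
        show ?thesis
        proof (cases "K2 \<inter> P \<in> FF")
          case True
          have "K1 \<inter> P \<subseteq> K2 \<inter> P" using f1(2) eq by blast
          then show ?thesis using f1(1) True by blast
        next
          case False
          then have "K2 \<inter> S = K2 \<inter> P" using c2 by auto
          then show ?thesis using f1(2) eq by simp
        qed
      qed
    qed
    have "K1 = Q \<inter> affine hull (insert v (K1 \<inter> P))" using KQ(2) inA[OF K1] by blast
    also have "\<dots> = Q \<inter> affine hull (insert v (K2 \<inter> P))" using GG by simp
    also have "\<dots> = K2" using KQ(2) inA[OF K2] by blast
    finally show "K1 = K2" .
  qed
  have surj: "R \<in> (\<lambda>K. K \<inter> S) ` A" if R: "R \<in> B" for R
  proof -
    have Rf: "R facet_of S" and v'R: "v' \<in> R" using R unfolding B_def by auto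
    note r = facet_S_ridge[OF Rf]
    obtain F where F: "F facet_of P" "F \<noteq> S" "F \<inter> S = R" using other_facet[OF Rf] by blast
    show ?thesis
    proof (cases "F \<in> FF")
      case True
      define K where "K = Q \<inter> {y. nrm F \<bullet> y = off F}"
      have hP: "\<And>p. p \<in> P \<Longrightarrow> nrm F \<bullet> p \<ge> off F" using facet_ge[OF F(1)] by blast
      have hv: "nrm F \<bullet> v \<ge> off F" using v_FF[OF True] by simp
      have Kf: "K face_of Q" unfolding K_def
        by (rule face_of_Int_supporting_hyperplane_ge[OF convexQ]) (use Q_half[OF hP hv] in blast)
      have KP: "K \<inter> P = F" unfolding K_def using facet_rep(4)[OF F(1)] P_sub_Q by blast
      have FK: "F \<subseteq> K" using KP by blast
      have "aff_dim K \<le> int DIM('a) - 1"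
        using aff_dim_subset[of K "{y. nrm F \<bullet> y = off F}"] facet_rep(1)[OF F(1)] unfolding K_def by simp
      moreover have "aff_dim F \<le> aff_dim K" using FK aff_dim_subset by blast
      ultimately have Kd: "aff_dim K = int DIM('a) - 1" using facet_dim[OF F(1)] by simp
      have "K \<noteq> {}" using Kd d3 by auto
      then have Kfac: "K facet_of Q" unfolding facet_of_def using Kf Kd dimQ by simp
      have vK: "v \<in> K" unfolding K_def using v_Q v_FF[OF True] by blast
      have v'K: "v' \<in> K" using v'R F(3) FK by blast
      have "closed_segment v v' \<subseteq> K" by (rule closed_segment_subset[OF vK v'K face_of_imp_convex[OF Kf]])
      then have "K \<in> A" unfolding A_def using Kfac by blast
      moreover have "K \<inter> S = R" using KS[of K] KP F(3) by simp
      ultimately show ?thesis by blast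
    next
      case False
      define \<alpha> where "\<alpha> = nrm F \<bullet> v - off F"
      define \<beta> where "\<beta> = off S - nrm S \<bullet> v"
      have al: "\<alpha> > 0" using v_other[OF F(1,2) False] unfolding \<alpha>_def by simp
      have be: "\<beta> > 0" using v_S unfolding \<beta>_def by simp
      define g where "g = \<beta> *\<^sub>R nrm F + \<alpha> *\<^sub>R nrm S"
      define g0 where "g0 = \<beta> * off F + \<alpha> * off S"
      have eg: "g \<bullet> y - g0 = \<beta> * (nrm F \<bullet> y - off F) + \<alpha> * (nrm S \<bullet> y - off S)" for y
        unfolding g_def g0_def by (simp add: inner_add_left algebra_simps)
      have gv: "g \<bullet> v = g0"
      proof -
        have "g \<bullet> v - g0 = \<beta> * \<alpha> + \<alpha> * (- \<beta>)" unfolding eg \<alpha>_def \<beta>_def by simp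
        then show ?thesis by simp
      qed
      have t1: "\<beta> * (nrm F \<bullet> p - off F) \<ge> 0" "\<alpha> * (nrm S \<bullet> p - off S) \<ge> 0" if "p \<in> P" for p
        using that al be facet_ge[OF F(1)] facet_ge[OF S_facet] by simp_all
      have gp: "g \<bullet> p \<ge> g0" if "p \<in> P" for p using eg[of p] t1[OF that] by simp
      have gpeq: "g \<bullet> p = g0 \<longleftrightarrow> p \<in> R" if p: "p \<in> P" for p
      proof
        assume "g \<bullet> p = g0"
        then have "\<beta> * (nrm F \<bullet> p - off F) + \<alpha> * (nrm S \<bullet> p - off S) = 0" using eg[of p] by simp
        then have "\<beta> * (nrm F \<bullet> p - off F) = 0" "\<alpha> * (nrm S \<bullet> p - off S) = 0"
          using t1[OF p] by linarith+
        then have "nrm F \<bullet> p = off F" "nrm S \<bullet> p = off S" using al be by simp_all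
        then have "p \<in> F" "p \<in> S" using facet_mem[OF F(1) p] facet_mem[OF S_facet p] by simp_all
        then show "p \<in> R" using F(3) by blast
      next
        assume "p \<in> R"
        then have "p \<in> F" "p \<in> S" using F(3) by blast+
        then have "nrm F \<bullet> p = off F" "nrm S \<bullet> p = off S"
          using facet_mem'[OF F(1)] facet_mem'[OF S_facet] by simp_all
        then show "g \<bullet> p = g0" using eg[of p] by simp
      qed
      define K where "K = Q \<inter> {y. g \<bullet> y = g0}"
      have Kf: "K face_of Q" unfolding K_def
        by (rule face_of_Int_supporting_hyperplane_ge[OF convexQ]) (use Q_half gp gv in auto)
      have KP: "K \<inter> P = R" unfolding K_def using gpeq P_sub_Q r(4) S_sub by blast
      have vK: "v \<in> K" unfolding K_def using v_Q gv by blast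
      have RK: "R \<subseteq> K" using KP by blast
      have "v \<notin> affine hull R"
      proof
        assume "v \<in> affine hull R"
        moreover have "affine hull R \<subseteq> affine hull S" using r(4) hull_mono by blast
        ultimately have "nrm S \<bullet> v = off S" using facet_aff[OF S_facet] by blast
        then show False using v_S by simp
      qed
      then have "aff_dim (insert v R) = int DIM('a) - 1" using r(2) aff_dim_insert[of v R] by simp
      moreover have "aff_dim (insert v R) \<le> aff_dim K" using vK RK by (intro aff_dim_subset) blast
      moreover have "K \<noteq> Q"
      proof
        assume "K = Q"
        then have "R = P" using KP P_sub_Q by blast
        then show False using r(2) dimP by simp
      qed
      then have "aff_dim K < aff_dim Q" using face_of_aff_dim_lt[OF convexQ Kf] by blast
      ultimately have Kd: "aff_dim K = int DIM('a) - 1" using dimQ by simp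
      have "K \<noteq> {}" using vK by blast
      then have Kfac: "K facet_of Q" unfolding facet_of_def using Kf Kd dimQ by simp
      have v'K: "v' \<in> K" using v'R RK by blast
      have "closed_segment v v' \<subseteq> K" by (rule closed_segment_subset[OF vK v'K face_of_imp_convex[OF Kf]])
      then have "K \<in> A" unfolding A_def using Kfac by blast
      moreover have "K \<inter> S = R" using KS[of K] KP r(4) by blast
      ultimately show ?thesis by blast
    qed
  qed
  have "bij_betw (\<lambda>K. K \<inter> S) A B"
    unfolding bij_betw_def using inj maps surj by blast
  then have "card A = card B" by (rule bij_betw_same_card)
  then show ?thesis unfolding fdeg_def A_def B_def by simp
qed

lemma good_edge:
  assumes e: "e edge_of P" and F: "F facet_of P" "F \<noteq> S" "F \<notin> FF" "e \<subseteq> F"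
  shows "e edge_of Q"
proof -
  have hP: "\<And>p. p \<in> P \<Longrightarrow> nrm F \<bullet> p \<ge> off F" using facet_ge[OF F(1)] by blast
  have gv: "nrm F \<bullet> v > off F" using v_other[OF F(1-3)] .
  have hv: "nrm F \<bullet> v \<ge> off F" using gv by simp
  have Feq: "Q \<inter> {y. nrm F \<bullet> y = off F} = F"
  proof
    show "Q \<inter> {y. nrm F \<bullet> y = off F} \<subseteq> F"
    proof
      fix x assume x: "x \<in> Q \<inter> {y. nrm F \<bullet> y = off F}"
      then obtain u p where up: "0 \<le> u" "u \<le> 1" "p \<in> P" "x = u *\<^sub>R v + (1 - u) *\<^sub>R p"
          "u = 0 \<or> nrm F \<bullet> v = off F" "u = 1 \<or> nrm F \<bullet> p = off F"
        using Q_eq_cases[OF hP hv, of x] by blast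
      have "u = 0" using up(5) gv by auto
      then have "x = p" "nrm F \<bullet> p = off F" using up(4,6) by auto
      then show "x \<in> F" using facet_mem[OF F(1) up(3)] by simp
    qed
    show "F \<subseteq> Q \<inter> {y. nrm F \<bullet> y = off F}"
      using facet_of_imp_subset[OF F(1)] P_sub_Q facet_mem'[OF F(1)] by blast
  qed
  have "(Q \<inter> {y. nrm F \<bullet> y = off F}) face_of Q"
    by (rule face_of_Int_supporting_hyperplane_ge[OF convexQ]) (use Q_half[OF hP hv] in blast)
  then have FQ: "F face_of Q" using Feq by simp
  have eP: "e face_of P" and ed: "aff_dim e = 1" using e by (auto simp: edge_of_def)
  have "e face_of F" using face_of_subset[OF eP F(4) facet_of_imp_subset[OF F(1)]] .
  then have "e face_of Q" using face_of_trans FQ by blast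
  then show ?thesis using ed by (simp add: edge_of_def)
qed

lemma count_edges:
  "int (f1 Q) = int (f1 P) + int DIM('a) - (if DIM('a) = 3 then int (card FF) else 0)"
proof -
  define EQ where "EQ = {E. E edge_of Q}"
  define EP where "EP = {e. e edge_of P}"
  define AP where "AP = {e. e edge_of P \<and> (\<exists>F. F facet_of P \<and> F \<noteq> S \<and> F \<notin> FF \<and> e \<subseteq> F)}"
  define BS where "BS = (\<lambda>w. closed_segment v w) ` cS"
  have extc: "w extreme_point_of S" if "w \<in> cS" for w
    using extreme_point_of_convex_hull_affine_independent[OF cS(1)] cS(3) that by simp
  have EQeq: "EQ = AP \<union> BS"
  proof
    show "EQ \<subseteq> AP \<union> BS"
    proof
      fix E assume "E \<in> EQ"
      then have E: "E edge_of Q" unfolding EQ_def by blast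
      show "E \<in> AP \<union> BS"
      proof (cases "v \<in> E")
        case True
        then obtain v' where v': "v' extreme_point_of S" "E = closed_segment v v'"
          using edge_with_v[OF E] by blast
        then have "v' \<in> cS" using ext_S_in_cS by blast
        then show ?thesis using v'(2) unfolding BS_def by blast
      next
        case False
        then show ?thesis using edge_no_v[OF E] unfolding AP_def by blast
      qed
    qed
    show "AP \<union> BS \<subseteq> EQ"
    proof
      fix E assume "E \<in> AP \<union> BS"
      then show "E \<in> EQ"
      proof
        assume "E \<in> AP"
        then show ?thesis unfolding AP_def EQ_def using good_edge by blast
      next
        assume "E \<in> BS"
        then obtain w where "w \<in> cS" "E = closed_segment v w" unfolding BS_def by blast
        then show ?thesis unfolding EQ_def using seg_edge[OF extc] by blast
      qed
    qed
  qed
  have disj: "AP \<inter> BS = {}"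
  proof -
    have "e \<subseteq> P" if "e \<in> AP" for e
      using that unfolding AP_def edge_of_def using face_of_imp_subset by blast
    moreover have "v \<in> e" if "e \<in> BS" for e using that unfolding BS_def by auto
    ultimately show ?thesis using v_notP by blast
  qed
  have finEP: "finite EP"
  proof -
    have "EP \<subseteq> {F. F face_of P}" unfolding EP_def edge_of_def by blast
    then show ?thesis using finite_polytope_faces[OF polyP] finite_subset by blast
  qed
  have APEP: "AP \<subseteq> EP" unfolding AP_def EP_def by blast
  have finAP: "finite AP" using finite_subset[OF APEP finEP] .
  have finBS: "finite BS" unfolding BS_def using finite_cS by simp
  have injB: "inj_on (\<lambda>w. closed_segment v w) cS"
  proof (rule inj_onI)
    fix a b assume a: "a \<in> cS" and b: "b \<in> cS" and eq: "closed_segment v a = closed_segment v b"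
    have "a \<in> P" "b \<in> P" using a b cS(3) S_sub hull_inc[of _ cS convex] by blast+
    then have "a \<noteq> v" "b \<noteq> v" using v_notP by auto
    moreover have "{v, a} = {v, b}" using eq closed_segment_eq by blast
    ultimately show "a = b" by (metis insert_iff singletonD)
  qed
  have cardBS: "card BS = DIM('a)" unfolding BS_def using card_image[OF injB] cS(2) by simp
  have cEQ: "card EQ = card AP + DIM('a)"
    using EQeq card_Un_disjoint[OF finAP finBS disj] cardBS by simp
  define D where "D = EP - AP"
  have cEP: "card EP = card AP + card D"
    unfolding D_def using card_Diff_subset[OF finAP APEP] card_mono[OF finEP APEP] by simp
  have Dchar: "e edge_of P \<and> (\<forall>F. F facet_of P \<and> F \<noteq> S \<and> e \<subseteq> F \<longrightarrow> F \<in> FF)" if "e \<in> D" for e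
    using that unfolding D_def EP_def AP_def by blast
  have cD: "card D = (if DIM('a) = 3 then card FF else 0)"
  proof (cases "DIM('a) = 3")
    case True
    have "D = (\<lambda>F. F \<inter> S) ` FF"
    proof
      show "D \<subseteq> (\<lambda>F. F \<inter> S) ` FF"
      proof
        fix e assume eD: "e \<in> D"
        note ec = Dchar[OF eD]
        have "e \<subseteq> S"
        proof (rule ccontr)
          assume "\<not> e \<subseteq> S"
          then obtain F where "F facet_of P" "F \<noteq> S" "F \<notin> FF" "e \<subseteq> F"
            using edge_not_in_S ec by blast
          then show False using ec by blast
        qed
        then obtain F where "F \<in> FF" "e = F \<inter> S" using edge_in_S_3[OF True] ec by blast
        then show "e \<in> (\<lambda>F. F \<inter> S) ` FF" by blast
      qed
      show "(\<lambda>F. F \<inter> S) ` FF \<subseteq> D"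
      proof
        fix e assume "e \<in> (\<lambda>F. F \<inter> S) ` FF"
        then obtain F where F: "F \<in> FF" "e = F \<inter> S" by blast
        have "e edge_of P" using FF_edge3(1)[OF True F(1)] F(2) by simp
        moreover have "e \<notin> AP"
        proof
          assume "e \<in> AP"
          then obtain G where G: "G facet_of P" "G \<noteq> S" "G \<notin> FF" "e \<subseteq> G" unfolding AP_def by blast
          then have "G = S \<or> G = F" using FF_edge3(2)[OF True F(1)] F(2) by blast
          then show False using G F(1) by blast
        qed
        ultimately show "e \<in> D" unfolding D_def EP_def by blast
      qed
    qed
    moreover have "inj_on (\<lambda>F. F \<inter> S) FF" using FF_inj by (meson inj_onI)
    ultimately show ?thesis using True card_image by simp
  next
    case False
    then have d4: "DIM('a) \<ge> 4" using d3 by simp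
    have "D = {}"
    proof (rule ccontr)
      assume "D \<noteq> {}"
      then obtain e where eD: "e \<in> D" by blast
      note ec = Dchar[OF eD]
      have "\<exists>F. F facet_of P \<and> F \<noteq> S \<and> F \<notin> FF \<and> e \<subseteq> F"
      proof (cases "e \<subseteq> S")
        case True then show ?thesis using edge_in_S_4[OF d4] ec by blast
      next
        case False then show ?thesis using edge_not_in_S ec by blast
      qed
      then show False using ec by blast
    qed
    then show ?thesis using False by simp
  qed
  have "f1 Q = card EQ" unfolding f1_def EQ_def ..
  moreover have "f1 P = card EP" unfolding f1_def EP_def ..
  ultimately show ?thesis using cEQ cEP cD by simp
qed

end

theorem proposition2p15:
  fixes P :: "'a::euclidean_space set" and S :: "'a set" and \<F> :: "'a set set" and v :: 'a
  assumes "DIM('a) \<ge> 3"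
    and "polytope P" and "aff_dim P = int DIM('a)"
    and "simplex_facet P S" and "bounded_position P S"
    and "\<F> \<subseteq> adj P S" and "nonsimple P S \<F>"
    and "v \<in> V_S P S \<F> {}"
  defines "Q \<equiv> convex hull (insert v P)"
  shows "(\<forall>e. e edge_of Q \<longrightarrow>
            (e edge_of P \<and> (\<exists>F. F facet_of P \<and> F \<noteq> S \<and> F \<notin> \<F> \<and> e \<subseteq> F)) \<or>
            (\<exists>v'. v' extreme_point_of S \<and> e = closed_segment v v'))
       \<and> (\<forall>v'. v' extreme_point_of S \<longrightarrow>
            closed_segment v v' edge_of Q \<and> fdeg Q (closed_segment v v') = fdeg S {v'})
       \<and> int (f1 Q) = int (f1 P) + int DIM('a) - (if DIM('a) = 3 then int (card \<F>) else 0)"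
proof -
  interpret setting P S \<F> v
    using assms(1-4,6-8) by unfold_locales
  have 1: "\<forall>e. e edge_of Q \<longrightarrow>
            (e edge_of P \<and> (\<exists>F. F facet_of P \<and> F \<noteq> S \<and> F \<notin> \<F> \<and> e \<subseteq> F)) \<or>
            (\<exists>v'. v' extreme_point_of S \<and> e = closed_segment v v')"
    unfolding Q_def using edge_no_v edge_with_v by blast
  have 2: "\<forall>v'. v' extreme_point_of S \<longrightarrow>
            closed_segment v v' edge_of Q \<and> fdeg Q (closed_segment v v') = fdeg S {v'}"
    unfolding Q_def using seg_edge fdeg_eq by blast
  have 3: "int (f1 Q) = int (f1 P) + int DIM('a) - (if DIM('a) = 3 then int (card \<F>) else 0)"
    unfolding Q_def by (rule count_edges)
  show ?thesis using 1 2 3 by blast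
qed


end
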